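(* Let $\mathcal X$ be a set of $n$ entities, each moving along a trajectory of $\tau$ edges, in general position. For every $\varepsilon\ge 0$, $m\ge 1$, and $\delta\ge 0$, the number of maximal groups is $O(\tau n^3)$. This bound is tight in the worst case: there are inputs with $\Omega(\tau n^3)$ maximal groups.
   Context: Let $\mathcal X$ be a set of $n$ entities. All trajectories are sampled at common times $t_0<t_1<\dots<t_\tau$; each entity $x$ has a position $x(t_i)\in\mathbb R^2$ at each $t_i$ and moves with constant velocity between consecutive sample times, so its trajectory is a polygonal path with $\tau$ edges defined on $[t_0,t_\tau]$. Fix $\varepsilon\ge 0$. Two entities $x,y$ are directly connected at time $t$ if $\|x(t)-y(t)\|\le 2\varepsilon$ (their $\varepsilon$-discs intersect). They are $\varepsilon$-connected at time $t$ if there is a sequence $x=x_0,\dots,x_k=y$ with $x_i,x_{i+1}$ directly connected at $t$. A component at time $t$ is a maximal set of pairwise $\varepsilon$-connected entities; the set $\mathcal C(t)$ of components partitions $\mathcal X$. General position: no two distinct events at which a pair of entities becomes directly connected or directly disconnected occur at the same time. Given a size parameter $m\ge 1$ and duration parameter $\delta\ge 0$, a set $G\subseteq\mathcal X$ is a group during a closed interval $I\subseteq[t_0,t_\tau]$ if $|G|\ge m$, $I$ has length at least $\delta$, and for every $t\in I$ there is $C\in\mathcal C(t)$ with $G\subseteq C$. A group $H$ during $I_H$ covers a group $G$ during $I_G$ if $G\subseteq H$ and $I_G\subseteq I_H$; a group is maximal if no other group covers it. Maximal groups are counted as distinct pairs $(G,I_G)$. *)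

theory Defs
  imports "HOL-Analysis.Analysis"
begin

text \<open>Entities are natural numbers (a finite set X of them).  Sample times are
  T 0 < T 1 < ... < T tau.  P x i is the position of entity x at time T i.\<close>

type_synonym point = "real^2"

definition valid_times :: "(nat \<Rightarrow> real) \<Rightarrow> nat \<Rightarrow> bool" where
  "valid_times T tau \<longleftrightarrow> (\<forall>i<tau. T i < T (Suc i))"

text \<open>Piecewise-linear interpolation of the samples Q 0, ..., Q tau
  (constant value extension outside [T 0, T tau], which is never used).\<close>
definition traj :: "(nat \<Rightarrow> real) \<Rightarrow> nat \<Rightarrow> (nat \<Rightarrow> point) \<Rightarrow> real \<Rightarrow> point" where
  "traj T tau Q t =
     (if t \<le> T 0 then Q 0
      else if T tau \<le> t then Q tau
      else (let i = (LEAST i. t \<le> T (Suc i))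
            in Q i + ((t - T i) / (T (Suc i) - T i)) *\<^sub>R (Q (Suc i) - Q i)))"

definition dconn :: "real \<Rightarrow> (nat \<Rightarrow> real) \<Rightarrow> nat \<Rightarrow> (nat \<Rightarrow> nat \<Rightarrow> point)
    \<Rightarrow> nat \<Rightarrow> nat \<Rightarrow> real \<Rightarrow> bool" where
  "dconn eps T tau P x y t \<longleftrightarrow> dist (traj T tau (P x) t) (traj T tau (P y) t) \<le> 2 * eps"

definition eps_conn :: "nat set \<Rightarrow> real \<Rightarrow> (nat \<Rightarrow> real) \<Rightarrow> nat \<Rightarrow> (nat \<Rightarrow> nat \<Rightarrow> point)
    \<Rightarrow> nat \<Rightarrow> nat \<Rightarrow> real \<Rightarrow> bool" where
  "eps_conn X eps T tau P x y t \<longleftrightarrow> x \<in> X \<and> y \<in> X \<and>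
     (\<lambda>u v. u \<in> X \<and> v \<in> X \<and> dconn eps T tau P u v t)\<^sup>*\<^sup>* x y"

definition components :: "nat set \<Rightarrow> real \<Rightarrow> (nat \<Rightarrow> real) \<Rightarrow> nat \<Rightarrow> (nat \<Rightarrow> nat \<Rightarrow> point)
    \<Rightarrow> real \<Rightarrow> nat set set" where
  "components X eps T tau P t = {{y \<in> X. eps_conn X eps T tau P x y t} | x. x \<in> X}"

definition is_group :: "nat set \<Rightarrow> real \<Rightarrow> (nat \<Rightarrow> real) \<Rightarrow> nat \<Rightarrow> (nat \<Rightarrow> nat \<Rightarrow> point)
    \<Rightarrow> nat \<Rightarrow> real \<Rightarrow> nat set \<Rightarrow> real set \<Rightarrow> bool" where
  "is_group X eps T tau P m delta G I \<longleftrightarrow>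
     G \<subseteq> X \<and> card G \<ge> m \<and>
     (\<exists>a b. I = {a..b} \<and> a \<le> b \<and> T 0 \<le> a \<and> b \<le> T tau \<and> b - a \<ge> delta) \<and>
     (\<forall>t\<in>I. \<exists>C\<in>components X eps T tau P t. G \<subseteq> C)"

definition maximal_groups :: "nat set \<Rightarrow> real \<Rightarrow> (nat \<Rightarrow> real) \<Rightarrow> nat \<Rightarrow> (nat \<Rightarrow> nat \<Rightarrow> point)
    \<Rightarrow> nat \<Rightarrow> real \<Rightarrow> (nat set \<times> real set) set" where
  "maximal_groups X eps T tau P m delta =
     {(G, I). is_group X eps T tau P m delta G I \<and>
        \<not> (\<exists>H J. is_group X eps T tau P m delta H J \<and> (H, J) \<noteq> (G, I) \<and> G \<subseteq> H \<and> I \<subseteq> J)}"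

definition becomes_conn :: "real \<Rightarrow> (nat \<Rightarrow> real) \<Rightarrow> nat \<Rightarrow> (nat \<Rightarrow> nat \<Rightarrow> point)
    \<Rightarrow> nat \<Rightarrow> nat \<Rightarrow> real \<Rightarrow> bool" where
  "becomes_conn eps T tau P x y t \<longleftrightarrow> T 0 < t \<and> t < T tau \<and> dconn eps T tau P x y t \<and>
     (\<forall>e>0. \<exists>s. t - e < s \<and> s < t \<and> \<not> dconn eps T tau P x y s)"

definition becomes_disc :: "real \<Rightarrow> (nat \<Rightarrow> real) \<Rightarrow> nat \<Rightarrow> (nat \<Rightarrow> nat \<Rightarrow> point)
    \<Rightarrow> nat \<Rightarrow> nat \<Rightarrow> real \<Rightarrow> bool" where
  "becomes_disc eps T tau P x y t \<longleftrightarrow> T 0 < t \<and> t < T tau \<and> dconn eps T tau P x y t \<and>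
     (\<forall>e>0. \<exists>s. t < s \<and> s < t + e \<and> \<not> dconn eps T tau P x y s)"

definition event :: "bool \<Rightarrow> real \<Rightarrow> (nat \<Rightarrow> real) \<Rightarrow> nat \<Rightarrow> (nat \<Rightarrow> nat \<Rightarrow> point)
    \<Rightarrow> nat \<Rightarrow> nat \<Rightarrow> real \<Rightarrow> bool" where
  "event k eps T tau P x y t \<longleftrightarrow>
     (if k then becomes_conn eps T tau P x y t else becomes_disc eps T tau P x y t)"

definition general_position :: "nat set \<Rightarrow> real \<Rightarrow> (nat \<Rightarrow> real) \<Rightarrow> nat
    \<Rightarrow> (nat \<Rightarrow> nat \<Rightarrow> point) \<Rightarrow> bool" where
  "general_position X eps T tau P \<longleftrightarrow>
     (\<forall>k k' x y x' y' t. x \<in> X \<longrightarrow> y \<in> X \<longrightarrow> x' \<in> X \<longrightarrow> y' \<in> X \<longrightarrow> x \<noteq> y \<longrightarrow> x' \<noteq> y' \<longrightarrow>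
        event k eps T tau P x y t \<longrightarrow> event k' eps T tau P x' y' t \<longrightarrow>
        k = k' \<and> {x, y} = {x', y'})"

end

theory Submission
  imports Defs
begin


lemma T_mono_strict:
  assumes "valid_times T tau" "i < j" "j \<le> tau"
  shows "T i < T j"
  using assms(2,3)
proof (induction j)
  case 0 then show ?case by simp
next
  case (Suc j)
  have "T j < T (Suc j)" using assms(1) Suc.prems unfolding valid_times_def by auto
  then show ?case using Suc by (cases "i = j") auto
qed

lemma T_mono: "valid_times T tau \<Longrightarrow> i \<le> j \<Longrightarrow> j \<le> tau \<Longrightarrow> T i \<le> T j"
  using T_mono_strict[of T tau i j] by (cases "i = j") auto

lemma T_inj: "valid_times T tau \<Longrightarrow> i \<le> tau \<Longrightarrow> j \<le> tau \<Longrightarrow> T i = T j \<Longrightarrow> i = j"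
  by (metis T_mono_strict less_irrefl nat_neq_iff)

lemma traj_edge:
  assumes vt: "valid_times T tau" and e: "e < tau" and t: "T e \<le> t" "t \<le> T (Suc e)"
  shows "traj T tau Q t = Q e + ((t - T e) / (T (Suc e) - T e)) *\<^sub>R (Q (Suc e) - Q e)"
proof -
  have pos: "T e < T (Suc e)" using vt e unfolding valid_times_def by auto
  show ?thesis
  proof (cases "t \<le> T 0")
    case True
    have "T 0 \<le> T e" using T_mono[OF vt, of 0 e] e by simp
    hence "T e = T 0" "t = T e" using True t by auto
    hence "e = 0" using T_inj[OF vt, of e 0] e by auto
    thus ?thesis using True \<open>t = T e\<close> by (simp add: traj_def)
  next
    case False
    note nle = False
    show ?thesis
    proof (cases "T tau \<le> t")
      case True
      have "T (Suc e) \<le> T tau" using T_mono[OF vt, of "Suc e" tau] e by simp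
      hence "t = T (Suc e)" "T (Suc e) = T tau" using True t by auto
      hence "Suc e = tau" using T_inj[OF vt, of "Suc e" tau] e by auto
      thus ?thesis using nle True \<open>t = T (Suc e)\<close> pos by (simp add: traj_def)
    next
      case False
      note nge = False
      show ?thesis
      proof (cases "T e < t")
        case True
        have L: "(LEAST i. t \<le> T (Suc i)) = e"
        proof (rule Least_equality)
          show "t \<le> T (Suc e)" by fact
          fix y assume "t \<le> T (Suc y)"
          show "e \<le> y"
          proof (rule ccontr)
            assume "\<not> e \<le> y" hence "Suc y \<le> e" by simp
            hence "T (Suc y) \<le> T e" using T_mono[OF vt, of "Suc y" e] e by simp
            thus False using True \<open>t \<le> T (Suc y)\<close> by simp
          qed
        qed
        show ?thesis using nle nge L by (simp add: traj_def Let_def)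
      next
        case False
        hence te: "t = T e" using t by simp
        have "e \<noteq> 0" using te nle by (cases e) auto
        then obtain d where d: "e = Suc d" by (cases e) auto
        have L: "(LEAST i. t \<le> T (Suc i)) = d"
        proof (rule Least_equality)
          show "t \<le> T (Suc d)" using te d by simp
          fix y assume "t \<le> T (Suc y)"
          show "d \<le> y"
          proof (rule ccontr)
            assume "\<not> d \<le> y" hence "Suc y < e" using d by simp
            hence "T (Suc y) < T e" using T_mono_strict[OF vt, of "Suc y" e] e by simp
            thus False using te \<open>t \<le> T (Suc y)\<close> by simp
          qed
        qed
        have pd: "T d < T (Suc d)" using vt d e unfolding valid_times_def by auto
        show ?thesis using nle nge L te d pd by (simp add: traj_def Let_def)
      qed
    qed
  qed
qed

lemma traj_const: "(\<And>i. Q i = c) \<Longrightarrow> traj T tau Q t = c"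
  by (simp add: traj_def Let_def)

lemma dconn_sym: "dconn eps T tau P x y t = dconn eps T tau P y x t"
  by (simp add: dconn_def dist_commute)

lemma eps_conn_sym:
  assumes a: "eps_conn X eps T tau P x y t"
  shows "eps_conn X eps T tau P y x t"
proof -
  let ?R = "\<lambda>u v. u \<in> X \<and> v \<in> X \<and> dconn eps T tau P u v t"
  have "?R\<^sup>*\<^sup>* x y" using a by (simp add: eps_conn_def)
  hence "?R\<^sup>*\<^sup>* y x"
  proof (induction rule: rtranclp_induct)
    case base thus ?case by simp
  next
    case (step y z)
    hence "?R z y" by (simp add: dconn_sym)
    thus ?case using step.IH by (rule converse_rtranclp_into_rtranclp)
  qed
  thus ?thesis using a by (simp add: eps_conn_def)
qed

lemma eps_conn_trans:
  "eps_conn X eps T tau P x y t \<Longrightarrow> eps_conn X eps T tau P y z t \<Longrightarrow> eps_conn X eps T tau P x z t"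
  unfolding eps_conn_def by (meson rtranclp_trans)

lemma comp_conn:
  assumes "C \<in> components X eps T tau P t" "x \<in> C" "y \<in> C"
  shows "eps_conn X eps T tau P x y t"
proof -
  obtain z where "z \<in> X" "C = {y \<in> X. eps_conn X eps T tau P z y t}"
    using assms(1) by (auto simp: components_def)
  thus ?thesis using assms eps_conn_sym eps_conn_trans by blast
qed

lemma comp_eq:
  assumes "C1 \<in> components X eps T tau P t" "C2 \<in> components X eps T tau P t" "x \<in> C1" "x \<in> C2"
  shows "C1 = C2"
proof -
  obtain z1 where z1: "C1 = {y \<in> X. eps_conn X eps T tau P z1 y t}"
    using assms(1) by (auto simp: components_def)
  obtain z2 where z2: "C2 = {y \<in> X. eps_conn X eps T tau P z2 y t}"
    using assms(2) by (auto simp: components_def)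
  have a1: "eps_conn X eps T tau P z1 x t" using assms(3) z1 by auto
  have a2: "eps_conn X eps T tau P z2 x t" using assms(4) z2 by auto
  have "eps_conn X eps T tau P z1 z2 t" using a1 a2 eps_conn_sym eps_conn_trans by blast
  hence "eps_conn X eps T tau P z1 y t = eps_conn X eps T tau P z2 y t" for y
    using eps_conn_sym eps_conn_trans by blast
  thus ?thesis using z1 z2 by auto
qed

lemma comp_mem: "x \<in> X \<Longrightarrow> {y \<in> X. eps_conn X eps T tau P x y t} \<in> components X eps T tau P t"
  unfolding components_def by (rule CollectI, rule exI[of _ x]) simp

lemma isolated_conn:
  assumes iso: "\<forall>y\<in>X. y \<noteq> x \<longrightarrow> \<not> dconn eps T tau P x y t"
    and c: "eps_conn X eps T tau P x z t"
  shows "z = x"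
proof -
  let ?R = "\<lambda>u v. u \<in> X \<and> v \<in> X \<and> dconn eps T tau P u v t"
  have "?R\<^sup>*\<^sup>* x z" using c by (simp add: eps_conn_def)
  thus ?thesis
  proof (induction rule: rtranclp_induct)
    case base thus ?case by simp
  next
    case (step y z) thus ?case using iso by auto
  qed
qed

lemma isolated_comp:
  assumes iso: "\<forall>y\<in>X. y \<noteq> x \<longrightarrow> \<not> dconn eps T tau P x y t"
    and "C \<in> components X eps T tau P t" "x \<in> C" "z \<in> C"
  shows "z = x"
  using isolated_conn[OF iso comp_conn[OF assms(2-4)]] .

lemma edge_exists:
  assumes vt: "valid_times T tau" and t: "T 0 < t" "t \<le> T tau"
  shows "\<exists>i<tau. T i < t \<and> t \<le> T (Suc i)"
proof -
  have tau: "tau \<noteq> 0" using t by (cases tau) auto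
  define i where "i = (LEAST i. t \<le> T (Suc i))"
  have ex: "t \<le> T (Suc (tau - 1))" using t tau by simp
  have i1: "t \<le> T (Suc i)" unfolding i_def by (rule LeastI[of "\<lambda>i. t \<le> T (Suc i)", OF ex])
  have i2: "i \<le> tau - 1" unfolding i_def by (rule Least_le[of "\<lambda>i. t \<le> T (Suc i)", OF ex])
  have i3: "T i < t"
  proof (cases i)
    case 0 thus ?thesis using t by simp
  next
    case (Suc j)
    have "\<not> t \<le> T (Suc j)" using not_less_Least[of j "\<lambda>i. t \<le> T (Suc i)"] Suc i_def by simp
    thus ?thesis using Suc by simp
  qed
  show ?thesis using i1 i2 i3 tau by (intro exI[of _ i]) auto
qed

lemma dconn_convex:
  assumes vt: "valid_times T tau" and i: "i < tau"
    and t1: "T i \<le> t1" and t2: "t2 \<le> T (Suc i)" and s: "t1 \<le> s" "s \<le> t2"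
    and d1: "dconn eps T tau P x y t1" and d2: "dconn eps T tau P x y t2"
  shows "dconn eps T tau P x y s"
proof (cases "t1 = t2")
  case True thus ?thesis using s d1 by simp
next
  case False
  hence lt: "t1 < t2" using s by simp
  define D where "D = T (Suc i) - T i"
  have Dp: "D > 0" using vt i unfolding valid_times_def D_def by auto
  define A where "A = P x i - P y i"
  define B where "B = (P x (Suc i) - P x i) - (P y (Suc i) - P y i)"
  define f where "f t = traj T tau (P x) t - traj T tau (P y) t" for t
  have fe: "f t = A + ((t - T i) / D) *\<^sub>R B" if "T i \<le> t" "t \<le> T (Suc i)" for t
    using that unfolding f_def A_def B_def D_def
    by (simp add: traj_edge[OF vt i] algebra_simps)
  define l where "l = (s - t1) / (t2 - t1)"
  have l0: "0 \<le> l" "l \<le> 1" using s lt by (auto simp: l_def field_simps)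
  have ll: "l * (t2 - t1) = s - t1" using lt by (simp add: l_def)
  have sig0: "s - T i = (1 - l) * (t1 - T i) + l * (t2 - T i)"
  proof -
    have "(1 - l) * (t1 - T i) + l * (t2 - T i) = t1 - T i + l * (t2 - t1)" by (simp add: algebra_simps)
    thus ?thesis using ll by simp
  qed
  have sig: "(s - T i) / D = (1 - l) * ((t1 - T i) / D) + l * ((t2 - T i) / D)"
    unfolding sig0 by (simp add: add_divide_distrib)
  have fs: "f s = (1 - l) *\<^sub>R f t1 + l *\<^sub>R f t2"
    using fe[of s] fe[of t1] fe[of t2] t1 t2 s sig by (simp add: algebra_simps)
  have "norm (f s) \<le> (1 - l) * norm (f t1) + l * norm (f t2)"
  proof -
    have "norm (f s) \<le> norm ((1 - l) *\<^sub>R f t1) + norm (l *\<^sub>R f t2)"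
      unfolding fs by (rule norm_triangle_ineq)
    thus ?thesis using l0 by simp
  qed
  also have "\<dots> \<le> (1 - l) * (2 * eps) + l * (2 * eps)"
    using d1 d2 l0 unfolding dconn_def dist_norm f_def
    by (intro add_mono mult_left_mono) auto
  also have "\<dots> = 2 * eps" by (simp add: algebra_simps)
  finally show ?thesis unfolding dconn_def dist_norm f_def .
qed

lemma conn_events_finite:
  assumes vt: "valid_times T tau"
  shows "finite {t. becomes_conn eps T tau P x y t} \<and> card {t. becomes_conn eps T tau P x y t} \<le> tau"
proof -
  let ?E = "{t. becomes_conn eps T tau P x y t}"
  define g where "g t = (SOME i. i < tau \<and> T i < t \<and> t \<le> T (Suc i))" for t
  have g: "g t < tau \<and> T (g t) < t \<and> t \<le> T (Suc (g t))" if "t \<in> ?E" for t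
  proof -
    have "T 0 < t" "t \<le> T tau" using that by (auto simp: becomes_conn_def)
    from edge_exists[OF vt this] show ?thesis unfolding g_def by (rule someI_ex)
  qed
  have nolt: "False" if t1E: "t1 \<in> ?E" and t2E: "t2 \<in> ?E" and geq: "g t1 = g t2" and lt12: "t1 < t2" for t1 t2
  proof -
    let ?i = "g t1"
    have b2: "becomes_conn eps T tau P x y t2" using t2E by simp
    then obtain s where s: "t2 - (t2 - t1) < s" "s < t2" "\<not> dconn eps T tau P x y s"
      using lt12 unfolding becomes_conn_def by (meson diff_gt_0_iff_gt)
    have "dconn eps T tau P x y s"
      apply (rule dconn_convex[OF vt, of ?i t1 t2])
      using g[OF t1E] g[OF t2E] t1E geq lt12 s b2
      by (auto simp: becomes_conn_def)
    thus False using s by simp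
  qed
  have inj: "inj_on g ?E"
  proof (rule inj_onI)
    fix t1 t2 assume "t1 \<in> ?E" "t2 \<in> ?E" "g t1 = g t2"
    thus "t1 = t2" using nolt[of t1 t2] nolt[of t2 t1] by (cases t1 t2 rule: linorder_cases) auto
  qed
  have sub: "g ` ?E \<subseteq> {..<tau}" using g by auto
  have "finite ?E" using finite_imageD[OF finite_subset[OF sub] inj] by simp
  moreover have "card ?E \<le> tau" using card_inj_on_le[OF inj sub] by simp
  ultimately show ?thesis by simp
qed

lemma mg_interval:
  assumes "(G, I) \<in> maximal_groups X eps T tau P m delta"
  obtains a b where "I = {a..b}" "a \<le> b" "T 0 \<le> a" "b \<le> T tau" "delta \<le> b - a"
  using assms unfolding maximal_groups_def is_group_def by auto

lemma Icc_same: "(a::real) \<le> b \<Longrightarrow> {a..b} = {c..d} \<Longrightarrow> a = c \<and> b = d"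
  by (metis Icc_eq_Icc)

lemma finite_pigeon:
  assumes fin: "finite A" and h: "\<forall>e>(0::real). \<exists>p\<in>A. Q p e"
    and mono: "\<And>p e e'. Q p e \<Longrightarrow> e \<le> e' \<Longrightarrow> Q p e'"
  shows "\<exists>p\<in>A. \<forall>e>0. Q p e"
proof (rule ccontr)
  assume "\<not> ?thesis"
  hence "\<forall>p\<in>A. \<exists>e>0. \<not> Q p e" by auto
  then obtain f where f: "\<forall>p\<in>A. f p > 0 \<and> \<not> Q p (f p)" by metis
  show False
  proof (cases "A = {}")
    case True thus False using h[rule_format, of 1] by auto
  next
    case False
    define e0 where "e0 = Min (f ` A)"
    have e0: "e0 > 0" unfolding e0_def using fin False f by auto
    then obtain p where p: "p \<in> A" "Q p e0" using h by auto
    have "e0 \<le> f p" unfolding e0_def using fin p by auto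
    hence qp: "Q p (f p)" by (rule mono[OF p(2)])
    have "0 < f p \<and> \<not> Q p (f p)" using f p(1) by (rule bspec)
    hence "\<not> Q p (f p)" by (rule conjunct2)
    thus False using qp by contradiction
  qed
qed

lemma group_extend_left:
  assumes grp: "is_group X eps T tau P m delta G {a..b}" and ab: "a \<le> b"
    and a': "T 0 \<le> a'" "a' \<le> a"
    and tog: "\<forall>t. a' \<le> t \<and> t < a \<longrightarrow> (\<exists>C\<in>components X eps T tau P t. G \<subseteq> C)"
  shows "is_group X eps T tau P m delta G {a'..b}"
proof -
  obtain a0 b0 where ab0: "{a..b} = {a0..b0}" "a0 \<le> b0" "T 0 \<le> a0" "b0 \<le> T tau" "delta \<le> b0 - a0"
    using grp unfolding is_group_def by blast
  have aa: "a0 = a" "b0 = b" using Icc_same[OF ab ab0(1)] by auto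
  have 1: "G \<subseteq> X" "m \<le> card G" using grp unfolding is_group_def by auto
  have 2: "\<forall>t\<in>{a..b}. \<exists>C\<in>components X eps T tau P t. G \<subseteq> C"
    using grp unfolding is_group_def by blast
  have 3: "\<forall>t\<in>{a'..b}. \<exists>C\<in>components X eps T tau P t. G \<subseteq> C"
  proof
    fix t assume t: "t \<in> {a'..b}"
    show "\<exists>C\<in>components X eps T tau P t. G \<subseteq> C"
    proof (cases "a \<le> t")
      case True hence "t \<in> {a..b}" using t by simp
      thus ?thesis using 2 by blast
    next
      case False thus ?thesis using tog t by simp
    qed
  qed
  have 4: "a' \<le> b" "b \<le> T tau" "delta \<le> b - a'" using ab0 aa a' ab by auto
  show ?thesis unfolding is_group_def
    apply (intro conjI)
    using 1 apply simp
    using 1 apply simp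
     apply (rule exI[of _ a'], rule exI[of _ b])
    using 4 a' apply simp
    using 3 by simp
qed

lemma mg_left_gap:
  assumes mg: "(G, {a..b}) \<in> maximal_groups X eps T tau P m delta" and ab: "a \<le> b"
    and a0: "T 0 < a" and e: "e > 0"
  shows "\<exists>s. a - e < s \<and> s < a \<and> T 0 \<le> s \<and> \<not> (\<exists>C\<in>components X eps T tau P s. G \<subseteq> C)"
proof (rule ccontr)
  assume nh: "\<not> ?thesis"
  have eh: "a - e < s \<Longrightarrow> s < a \<Longrightarrow> T 0 \<le> s \<Longrightarrow> (\<exists>C\<in>components X eps T tau P s. G \<subseteq> C)" for s
    using nh by blast
  have grp: "is_group X eps T tau P m delta G {a..b}"
    using mg unfolding maximal_groups_def by simp
  have maxi: "\<not> (\<exists>H J. is_group X eps T tau P m delta H J \<and> (H, J) \<noteq> (G, {a..b}) \<and> G \<subseteq> H \<and> {a..b} \<subseteq> J)"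
    using mg unfolding maximal_groups_def by simp
  define a' where "a' = max (T 0) (a - e / 2)"
  have a'a: "a' < a" using a0 e unfolding a'_def by auto
  have a'0: "T 0 \<le> a'" unfolding a'_def by simp
  have a'e: "a - e < a'" using e unfolding a'_def by simp
  have tg: "\<forall>t. a' \<le> t \<and> t < a \<longrightarrow> (\<exists>C\<in>components X eps T tau P t. G \<subseteq> C)"
  proof (intro allI impI)
    fix t assume "a' \<le> t \<and> t < a"
    thus "\<exists>C\<in>components X eps T tau P t. G \<subseteq> C" using eh[of t] a'e a'0 by simp
  qed
  have grpJ: "is_group X eps T tau P m delta G {a'..b}"
    by (rule group_extend_left[OF grp ab a'0 _ tg]) (use a'a in simp)
  have neI: "{a'..b} \<noteq> {a..b}"
  proof
    assume eq: "{a'..b} = {a..b}"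
    have "a' \<in> {a'..b}" using a'a ab by simp
    hence "a' \<in> {a..b}" using eq by simp
    thus False using a'a by simp
  qed
  hence ne: "(G, {a'..b}) \<noteq> (G, {a..b})" by simp
  have sub: "{a..b} \<subseteq> {a'..b}" using a'a by (simp add: less_imp_le)
  have "\<exists>H J. is_group X eps T tau P m delta H J \<and> (H, J) \<noteq> (G, {a..b}) \<and> G \<subseteq> H \<and> {a..b} \<subseteq> J"
    apply (rule exI[of _ G], rule exI[of _ "{a'..b}"])
    using grpJ ne sub by simp
  with maxi show False by (rule notE)
qed

lemma mg_start:
  assumes vt: "valid_times T tau" and fin: "finite X" and m: "m \<ge> 1"
    and mg: "(G, {a..b}) \<in> maximal_groups X eps T tau P m delta" and ab: "a \<le> b"
  shows "a = T 0 \<or> a = T tau \<or> (\<exists>x\<in>X. \<exists>y\<in>X. becomes_conn eps T tau P x y a)"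
proof -
  let ?I = "{a..b}"
  have grp: "is_group X eps T tau P m delta G ?I"
    using mg unfolding maximal_groups_def by simp
  from mg_interval[OF mg] obtain a0 b0 where ab0: "?I = {a0..b0}" "a0 \<le> b0" "T 0 \<le> a0" "b0 \<le> T tau" "delta \<le> b0 - a0" .
  have aa: "a0 = a" "b0 = b" using Icc_same[OF ab ab0(1)] by auto
  have GX: "G \<subseteq> X" and cG: "card G \<ge> m" using grp unfolding is_group_def by auto
  have tog: "\<forall>t\<in>?I. \<exists>C\<in>components X eps T tau P t. G \<subseteq> C"
    using grp unfolding is_group_def by blast
  show ?thesis
  proof (rule ccontr)
    assume nc: "\<not> ?thesis"
    have a1: "T 0 < a" "a < T tau" using nc ab0 aa ab by auto
    have K: "\<forall>e>0. \<exists>s. a - e < s \<and> s < a \<and> T 0 \<le> s \<and> \<not> (\<exists>C\<in>components X eps T tau P s. G \<subseteq> C)"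
      using mg_left_gap[OF mg ab a1(1)] by blast
    have "G \<noteq> {}" using cG m by (cases "G = {}") auto
    then obtain g0 where g0: "g0 \<in> G" by auto
    obtain C0 where C0: "C0 \<in> components X eps T tau P a" "G \<subseteq> C0" using tog[rule_format, of a] ab by auto
    have cg: "eps_conn X eps T tau P g0 g a" if "g \<in> G" for g
      using comp_conn[OF C0(1)] C0(2) g0 that by auto
    define Ed where "Ed = {p \<in> X \<times> X. dconn eps T tau P (fst p) (snd p) a}"
    have finEd: "finite Ed" using fin unfolding Ed_def by auto
    have K2: "\<exists>C\<in>components X eps T tau P s. G \<subseteq> C"
      if all: "\<forall>p\<in>Ed. dconn eps T tau P (fst p) (snd p) s" for s
    proof -
      let ?Ra = "\<lambda>u v. u \<in> X \<and> v \<in> X \<and> dconn eps T tau P u v a"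
      let ?Rs = "\<lambda>u v. u \<in> X \<and> v \<in> X \<and> dconn eps T tau P u v s"
      have mono: "?Ra u v \<Longrightarrow> ?Rs u v" for u v using all unfolding Ed_def by auto
      have cgs: "eps_conn X eps T tau P g0 g s" if "g \<in> G" for g
      proof -
        have "?Ra\<^sup>*\<^sup>* g0 g" using cg[OF that] by (simp add: eps_conn_def)
        moreover have "\<And>u v. ?Ra u v \<longrightarrow> ?Rs u v" using mono by blast
        ultimately have "?Rs\<^sup>*\<^sup>* g0 g" using mono_rtranclp[of ?Ra ?Rs] by blast
        thus ?thesis using that g0 GX by (auto simp: eps_conn_def)
      qed
      have g0X: "g0 \<in> X" using g0 GX by auto
      have memC: "{y \<in> X. eps_conn X eps T tau P g0 y s} \<in> components X eps T tau P s"
        by (rule comp_mem[OF g0X])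
      have subC: "G \<subseteq> {y \<in> X. eps_conn X eps T tau P g0 y s}" using cgs GX by blast
      show ?thesis using memC subC by (rule bexI[rotated])
    qed
    have K3: "\<forall>e>0. \<exists>p\<in>Ed. \<exists>s. a - e < s \<and> s < a \<and> \<not> dconn eps T tau P (fst p) (snd p) s"
    proof (intro allI impI)
      fix e :: real assume "e > 0"
      then obtain s where s: "a - e < s" "s < a" "\<not> (\<exists>C\<in>components X eps T tau P s. G \<subseteq> C)"
        using K by blast
      have "\<not> (\<forall>p\<in>Ed. dconn eps T tau P (fst p) (snd p) s)" using K2[of s] s(3) by meson
      then obtain p where "p \<in> Ed" "\<not> dconn eps T tau P (fst p) (snd p) s" by blast
      thus "\<exists>p\<in>Ed. \<exists>s. a - e < s \<and> s < a \<and> \<not> dconn eps T tau P (fst p) (snd p) s"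
        using s by blast
    qed
    have monoQ: "\<exists>s. a - e' < s \<and> s < a \<and> \<not> dconn eps T tau P (fst p) (snd p) s"
      if h1: "\<exists>s. a - e < s \<and> s < a \<and> \<not> dconn eps T tau P (fst p) (snd p) s" and h2: "e \<le> e'" for p e e'
    proof -
      obtain s where "a - e < s" "s < a" "\<not> dconn eps T tau P (fst p) (snd p) s" using h1 by blast
      thus ?thesis using h2 by (intro exI[of _ s]) auto
    qed
    have "\<exists>p\<in>Ed. \<forall>e>0. \<exists>s. a - e < s \<and> s < a \<and> \<not> dconn eps T tau P (fst p) (snd p) s"
      apply (rule finite_pigeon[of Ed "\<lambda>p e. \<exists>s. a - e < s \<and> s < a \<and> \<not> dconn eps T tau P (fst p) (snd p) s", OF finEd K3])
      by (erule monoQ)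
    then obtain p where p: "p \<in> Ed" "\<forall>e>0. \<exists>s. a - e < s \<and> s < a \<and> \<not> dconn eps T tau P (fst p) (snd p) s"
      by blast
    have "becomes_conn eps T tau P (fst p) (snd p) a"
      unfolding becomes_conn_def using p a1 unfolding Ed_def by auto
    moreover have "fst p \<in> X" "snd p \<in> X" using p unfolding Ed_def by auto
    ultimately show False using nc by blast
  qed
qed



definition laminar :: "'a set set \<Rightarrow> bool" where
  "laminar F \<longleftrightarrow> (\<forall>A\<in>F. \<forall>B\<in>F. A \<inter> B \<noteq> {} \<longrightarrow> A \<subseteq> B \<or> B \<subseteq> A)"

lemma lam_aux:
  assumes lam: "laminar F" and ne: "{} \<notin> F" and S1: "S1 \<in> F" and U1: "U1 \<in> F" and U2: "U2 \<in> F"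
    and u1: "U1 = S1 - {x}" and x1: "x \<in> S1" and x2: "x \<notin> U2" and sub: "U1 \<subseteq> U2"
  shows "U2 \<subseteq> U1"
proof -
  have "U1 \<noteq> {}" using U1 ne by auto
  hence "U2 \<inter> S1 \<noteq> {}" using sub u1 by auto
  hence "U2 \<subseteq> S1 \<or> S1 \<subseteq> U2" using lam U2 S1 unfolding laminar_def by blast
  moreover have "\<not> S1 \<subseteq> U2" using x1 x2 by auto
  ultimately have "U2 \<subseteq> S1" by simp
  thus ?thesis using u1 x2 by auto
qed

lemma laminar_card:
  assumes "finite X"
  shows "F \<subseteq> Pow X \<Longrightarrow> {} \<notin> F \<Longrightarrow> laminar F \<Longrightarrow> card F \<le> 2 * card X"
  using assms
proof (induction X arbitrary: F rule: finite_induct)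
  case empty
  hence "F = {}" by auto
  thus ?case by simp
next
  case (insert x A)
  have finF: "finite F" using insert.prems(1) insert.hyps(1) finite_subset[of F "Pow (insert x A)"] by auto
  define F' where "F' = (\<lambda>S. S - {x}) ` F - {{}}"
  have F'sub: "F' \<subseteq> Pow A" using insert.prems(1) by (auto simp: F'_def)
  have F'ne: "{} \<notin> F'" by (simp add: F'_def)
  have F'lam: "laminar F'"
    unfolding laminar_def
  proof (intro ballI impI)
    fix U V assume U: "U \<in> F'" and V: "V \<in> F'" and UV: "U \<inter> V \<noteq> {}"
    obtain S1 where S1: "S1 \<in> F" "U = S1 - {x}" using U by (auto simp: F'_def)
    obtain S2 where S2: "S2 \<in> F" "V = S2 - {x}" using V by (auto simp: F'_def)
    have "S1 \<inter> S2 \<noteq> {}" using UV S1 S2 by auto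
    hence "S1 \<subseteq> S2 \<or> S2 \<subseteq> S1" using insert.prems(3) S1 S2 unfolding laminar_def by blast
    thus "U \<subseteq> V \<or> V \<subseteq> U" using S1 S2 by auto
  qed
  have IH: "card F' \<le> 2 * card A" using insert.IH[OF F'sub F'ne F'lam] .
  define Fn where "Fn = {S \<in> F. x \<notin> S}"
  define Fx where "Fx = {S \<in> F. x \<in> S \<and> S \<noteq> {x}}"
  define h where "h S = S - {x}" for S :: "'a set"
  have cover: "F \<subseteq> {{x}} \<union> Fx \<union> Fn" unfolding Fx_def Fn_def by auto
  have finFx: "finite Fx" "finite Fn" using finF unfolding Fx_def Fn_def by auto
  have c1: "card F \<le> 1 + card Fx + card Fn"
  proof -
    have "card F \<le> card ({{x}} \<union> Fx \<union> Fn)" by (rule card_mono) (use finFx cover in auto)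
    also have "\<dots> \<le> card ({{x}} \<union> Fx) + card Fn" by (rule card_Un_le)
    also have "\<dots> \<le> card {{x}} + card Fx + card Fn" using card_Un_le[of "{{x}}" Fx] by simp
    finally show ?thesis by simp
  qed
  have injh: "inj_on h Fx"
  proof (rule inj_onI)
    fix S1 S2 assume "S1 \<in> Fx" "S2 \<in> Fx" "h S1 = h S2"
    thus "S1 = S2" unfolding Fx_def h_def by (metis insert_Diff mem_Collect_eq)
  qed
  have hsub: "h ` Fx \<subseteq> F'" unfolding Fx_def h_def F'_def by auto
  have nsub: "Fn \<subseteq> F'"
  proof
    fix S assume S: "S \<in> Fn"
    hence "S = S - {x}" "S \<in> F" "S \<noteq> {}" using insert.prems(2) unfolding Fn_def by auto
    thus "S \<in> F'" unfolding F'_def by (metis DiffI image_eqI singletonD)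
  qed
  have finF': "finite F'" using F'sub insert.hyps(1) finite_subset[of F' "Pow A"] by auto
  have inter: "card (h ` Fx \<inter> Fn) \<le> 1"
  proof -
    have "U1 = U2" if U1: "U1 \<in> h ` Fx \<inter> Fn" and U2: "U2 \<in> h ` Fx \<inter> Fn" for U1 U2
    proof -
      obtain S1 where S1: "S1 \<in> Fx" "U1 = S1 - {x}" using U1 unfolding h_def by auto
      obtain S2 where S2: "S2 \<in> Fx" "U2 = S2 - {x}" using U2 unfolding h_def by auto
      have F1: "S1 \<in> F" "x \<in> S1" "S2 \<in> F" "x \<in> S2" using S1 S2 unfolding Fx_def by auto
      have F2: "U1 \<in> F" "x \<notin> U1" "U2 \<in> F" "x \<notin> U2" using U1 U2 unfolding Fn_def by auto
      have "S1 \<subseteq> S2 \<or> S2 \<subseteq> S1" using insert.prems(3) F1 unfolding laminar_def by blast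
      thus ?thesis
      proof
        assume "S1 \<subseteq> S2"
        hence "U1 \<subseteq> U2" using S1 S2 by auto
        moreover have "U2 \<subseteq> U1"
          by (rule lam_aux[OF insert.prems(3) insert.prems(2) F1(1) F2(1) F2(3) S1(2) F1(2) F2(4) calculation])
        ultimately show ?thesis by simp
      next
        assume "S2 \<subseteq> S1"
        hence "U2 \<subseteq> U1" using S1 S2 by auto
        moreover have "U1 \<subseteq> U2"
          by (rule lam_aux[OF insert.prems(3) insert.prems(2) F1(3) F2(3) F2(1) S2(2) F1(4) F2(2) calculation])
        ultimately show ?thesis by simp
      qed
    qed
    moreover have "finite (h ` Fx \<inter> Fn)" using finFx by auto
    ultimately show ?thesis using card_le_Suc0_iff_eq by (metis One_nat_def)
  qed
  have "card (h ` Fx) + card Fn = card (h ` Fx \<union> Fn) + card (h ` Fx \<inter> Fn)"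
    by (rule card_Un_Int) (use finFx in auto)
  moreover have "card (h ` Fx \<union> Fn) \<le> card F'" by (rule card_mono[OF finF']) (use hsub nsub in auto)
  moreover have "card (h ` Fx) = card Fx" by (rule card_image[OF injh])
  ultimately have "card Fx + card Fn \<le> card F' + 1" using inter by linarith
  hence "card F \<le> 2 + 2 * card A" using c1 IH by linarith
  thus ?case using insert.hyps by simp
qed

lemma mg_props:
  assumes "(G, I) \<in> maximal_groups X eps T tau P m delta"
  shows "is_group X eps T tau P m delta G I"
    "\<not> (\<exists>H J. is_group X eps T tau P m delta H J \<and> (H, J) \<noteq> (G, I) \<and> G \<subseteq> H \<and> I \<subseteq> J)"
  using assms unfolding maximal_groups_def by simp_all

lemma mg_ab:
  assumes "(G, {a..b}) \<in> maximal_groups X eps T tau P m delta"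
  shows "a \<le> b"
proof -
  from mg_interval[OF assms] obtain a0 b0 where i: "{a..b} = {a0..b0}" "a0 \<le> b0" by metis
  have "a0 \<in> {a..b}" using i by simp
  thus ?thesis by simp
qed

lemma mg_nest:
  assumes fin: "finite X"
    and m1: "(G1, {a..b1}) \<in> maximal_groups X eps T tau P m delta"
    and m2: "(G2, {a..b2}) \<in> maximal_groups X eps T tau P m delta"
    and b12: "b1 \<le> b2" and int: "G1 \<inter> G2 \<noteq> {}"
  shows "G2 \<subseteq> G1"
proof -
  have g1: "is_group X eps T tau P m delta G1 {a..b1}" using mg_props(1)[OF m1] .
  have g2: "is_group X eps T tau P m delta G2 {a..b2}" using mg_props(1)[OF m2] .
  have maxi: "\<not> (\<exists>H J. is_group X eps T tau P m delta H J \<and> (H, J) \<noteq> (G1, {a..b1}) \<and> G1 \<subseteq> H \<and> {a..b1} \<subseteq> J)"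
    using mg_props(2)[OF m1] .
  obtain x where x: "x \<in> G1" "x \<in> G2" using int by auto
  have G1X: "G1 \<subseteq> X" "m \<le> card G1" using g1 unfolding is_group_def by auto
  have G2X: "G2 \<subseteq> X" using g2 unfolding is_group_def by auto
  have iv: "\<exists>a' b'. {a..b1} = {a'..b'} \<and> a' \<le> b' \<and> T 0 \<le> a' \<and> b' \<le> T tau \<and> delta \<le> b' - a'"
    using g1 unfolding is_group_def by blast
  have t1: "\<forall>t\<in>{a..b1}. \<exists>C\<in>components X eps T tau P t. G1 \<subseteq> C" using g1 unfolding is_group_def by blast
  have t2: "\<forall>t\<in>{a..b2}. \<exists>C\<in>components X eps T tau P t. G2 \<subseteq> C" using g2 unfolding is_group_def by blast
  have tu: "\<forall>t\<in>{a..b1}. \<exists>C\<in>components X eps T tau P t. G1 \<union> G2 \<subseteq> C"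
  proof
    fix t assume t: "t \<in> {a..b1}"
    obtain C1 where C1: "C1 \<in> components X eps T tau P t" "G1 \<subseteq> C1" using t1 t by blast
    have "t \<in> {a..b2}" using t b12 by simp
    then obtain C2 where C2: "C2 \<in> components X eps T tau P t" "G2 \<subseteq> C2" using t2 by blast
    have "C1 = C2" by (rule comp_eq[OF C1(1) C2(1)]) (use x C1 C2 in auto)
    thus "\<exists>C\<in>components X eps T tau P t. G1 \<union> G2 \<subseteq> C" using C1 C2 by auto
  qed
  have cu: "m \<le> card (G1 \<union> G2)"
  proof -
    have "card G1 \<le> card (G1 \<union> G2)" by (rule card_mono) (use fin G1X G2X finite_subset in auto)
    thus ?thesis using G1X by simp
  qed
  have gu: "is_group X eps T tau P m delta (G1 \<union> G2) {a..b1}"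
    unfolding is_group_def using G1X G2X cu iv tu by blast
  have "G1 \<union> G2 = G1"
  proof (rule ccontr)
    assume "G1 \<union> G2 \<noteq> G1"
    hence "(G1 \<union> G2, {a..b1}) \<noteq> (G1, {a..b1})" by simp
    hence "\<exists>H J. is_group X eps T tau P m delta H J \<and> (H, J) \<noteq> (G1, {a..b1}) \<and> G1 \<subseteq> H \<and> {a..b1} \<subseteq> J"
      using gu by blast
    with maxi show False by (rule notE)
  qed
  thus ?thesis by auto
qed

lemma mg_same_start:
  assumes m1: "(G, {a..b1}) \<in> maximal_groups X eps T tau P m delta"
    and m2: "(G, {a..b2}) \<in> maximal_groups X eps T tau P m delta"
    and b12: "b1 \<le> b2"
  shows "b1 = b2"
proof (rule ccontr)
  assume ne: "b1 \<noteq> b2"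
  have ab: "a \<le> b1" using mg_ab[OF m1] .
  have maxi: "\<not> (\<exists>H J. is_group X eps T tau P m delta H J \<and> (H, J) \<noteq> (G, {a..b1}) \<and> G \<subseteq> H \<and> {a..b1} \<subseteq> J)"
    using mg_props(2)[OF m1] .
  have g2: "is_group X eps T tau P m delta G {a..b2}" using mg_props(1)[OF m2] .
  have "b2 \<in> {a..b2}" using ab b12 by simp
  moreover have "b2 \<notin> {a..b1}" using ne b12 by simp
  ultimately have "(G, {a..b2}) \<noteq> (G, {a..b1})" by auto
  moreover have "{a..b1} \<subseteq> {a..b2}" using b12 by auto
  ultimately have "\<exists>H J. is_group X eps T tau P m delta H J \<and> (H, J) \<noteq> (G, {a..b1}) \<and> G \<subseteq> H \<and> {a..b1} \<subseteq> J"
    using g2 by blast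
  with maxi show False by (rule notE)
qed

lemma upper_bound:
  assumes fin: "finite X" and tau: "tau \<ge> 1" and vt: "valid_times T tau" and m: "m \<ge> 1"
  shows "finite (maximal_groups X eps T tau P m delta) \<and>
         card (maximal_groups X eps T tau P m delta) \<le> 6 * tau * card X ^ 3"
proof -
  let ?MG = "maximal_groups X eps T tau P m delta"
  define E where "E p = {t. becomes_conn eps T tau P (fst p) (snd p) t}" for p :: "nat \<times> nat"
  define S where "S = {T 0, T tau} \<union> (\<Union>p\<in>X\<times>X. E p)"
  define F where "F a = {G. \<exists>b. (G, {a..b}) \<in> ?MG}" for a
  have finE: "finite (E p)" "card (E p) \<le> tau" for p
    using conn_events_finite[OF vt] unfolding E_def by auto
  have finS: "finite S" unfolding S_def using fin finE by auto
  have cS1: "card S \<le> card {T 0, T tau} + card (\<Union>p\<in>X\<times>X. E p)" unfolding S_def by (rule card_Un_le)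
  have cS2: "card {T 0, T tau} \<le> 2" by (cases "T 0 = T tau") auto
  have cS3: "card (\<Union>p\<in>X\<times>X. E p) \<le> (\<Sum>p\<in>X\<times>X. card (E p))" by (rule card_UN_le) (use fin in simp)
  have cS4: "(\<Sum>p\<in>X\<times>X. card (E p)) \<le> (\<Sum>p\<in>X\<times>X. tau)" by (rule sum_mono) (use finE in auto)
  have cS5: "(\<Sum>p\<in>X\<times>X. tau) = card X * card X * tau" by (simp add: card_cartesian_product)
  have cardS: "card S \<le> 2 + card X * card X * tau" using cS1 cS2 cS3 cS4 cS5 by linarith
  have FX: "F a \<subseteq> Pow X" for a
    unfolding F_def using mg_props(1) unfolding is_group_def by blast
  have finF: "finite (F a)" for a using FX[of a] fin finite_subset by blast
  have Fne: "{} \<notin> F a" for a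
  proof
    assume "{} \<in> F a"
    then obtain b where "({}, {a..b}) \<in> ?MG" unfolding F_def by auto
    hence "m \<le> card ({}::nat set)" using mg_props(1) unfolding is_group_def by blast
    thus False using m by simp
  qed
  have Flam: "laminar (F a)" for a
    unfolding laminar_def
  proof (intro ballI impI)
    fix G1 G2 assume G1: "G1 \<in> F a" and G2: "G2 \<in> F a" and int: "G1 \<inter> G2 \<noteq> {}"
    obtain b1 where b1: "(G1, {a..b1}) \<in> ?MG" using G1 unfolding F_def by auto
    obtain b2 where b2: "(G2, {a..b2}) \<in> ?MG" using G2 unfolding F_def by auto
    show "G1 \<subseteq> G2 \<or> G2 \<subseteq> G1"
    proof (cases "b1 \<le> b2")
      case True thus ?thesis using mg_nest[OF fin b1 b2 True int] by simp
    next
      case False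
      hence "b2 \<le> b1" by simp
      moreover have "G2 \<inter> G1 \<noteq> {}" using int by auto
      ultimately show ?thesis using mg_nest[OF fin b2 b1] by simp
    qed
  qed
  have cardF: "card (F a) \<le> 2 * card X" for a by (rule laminar_card[OF fin FX Fne Flam])
  define phi where "phi q = (Inf (snd q), fst q)" for q :: "nat set \<times> real set"
  have sub: "phi ` ?MG \<subseteq> Sigma S F"
  proof
    fix z assume "z \<in> phi ` ?MG"
    then obtain G I where GI: "(G, I) \<in> ?MG" "z = phi (G, I)" by auto
    from mg_interval[OF GI(1)] obtain a b where ab: "I = {a..b}" "a \<le> b" by metis
    have z: "z = (a, G)" using GI(2) ab unfolding phi_def by simp
    have mg: "(G, {a..b}) \<in> ?MG" using GI(1) ab by simp
    have "a = T 0 \<or> a = T tau \<or> (\<exists>x\<in>X. \<exists>y\<in>X. becomes_conn eps T tau P x y a)"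
      by (rule mg_start[OF vt fin m mg ab(2)])
    hence "a \<in> S" unfolding S_def E_def by force
    moreover have "G \<in> F a" unfolding F_def using mg by auto
    ultimately show "z \<in> Sigma S F" using z by simp
  qed
  have inj: "inj_on phi ?MG"
  proof (rule inj_onI)
    fix q1 q2 assume q1: "q1 \<in> ?MG" and q2: "q2 \<in> ?MG" and eq: "phi q1 = phi q2"
    obtain G1 I1 where Q1: "q1 = (G1, I1)" by (cases q1)
    obtain G2 I2 where Q2: "q2 = (G2, I2)" by (cases q2)
    from mg_interval[of G1 I1] q1 Q1 obtain a1 b1 where i1: "I1 = {a1..b1}" "a1 \<le> b1" by metis
    from mg_interval[of G2 I2] q2 Q2 obtain a2 b2 where i2: "I2 = {a2..b2}" "a2 \<le> b2" by metis
    have e: "a1 = a2" "G1 = G2" using eq Q1 Q2 i1 i2 unfolding phi_def by auto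
    have m1: "(G1, {a1..b1}) \<in> ?MG" using q1 Q1 i1 by simp
    have m2: "(G1, {a1..b2}) \<in> ?MG" using q2 Q2 i2 e by simp
    have "b1 = b2"
    proof (cases "b1 \<le> b2")
      case True thus ?thesis using mg_same_start[OF m1 m2] by simp
    next
      case False thus ?thesis using mg_same_start[OF m2 m1] by simp
    qed
    thus "q1 = q2" using Q1 Q2 i1 i2 e by simp
  qed
  have finSig: "finite (Sigma S F)" using finS finF by auto
  have finMG: "finite ?MG" by (rule finite_imageD[OF finite_subset[OF sub finSig] inj])
  have "card ?MG = card (phi ` ?MG)" by (rule card_image[OF inj, symmetric])
  also have "\<dots> \<le> card (Sigma S F)" by (rule card_mono[OF finSig sub])
  also have "\<dots> = (\<Sum>a\<in>S. card (F a))" using finS finF by simp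
  also have "\<dots> \<le> (\<Sum>a\<in>S. 2 * card X)" by (rule sum_mono) (rule cardF)
  also have "\<dots> = card S * (2 * card X)" by simp
  also have "\<dots> \<le> (2 + card X * card X * tau) * (2 * card X)" using cardS by (rule mult_right_mono) simp
  also have "\<dots> \<le> 6 * tau * card X ^ 3"
  proof (cases "card X = 0")
    case True thus ?thesis by simp
  next
    case False
    define n where "n = card X"
    have n1: "1 \<le> n" using False n_def by simp
    have "4 * n \<le> 4 * (n * n * n * tau)"
    proof -
      have "n \<le> n * n" using n1 by simp
      also have "\<dots> \<le> n * n * n" using n1 by simp
      also have "\<dots> \<le> n * n * n * tau" using tau by simp
      finally show ?thesis by simp
    qed
    hence "(2 + n * n * tau) * (2 * n) \<le> 6 * tau * n ^ 3"
      by (simp add: algebra_simps power3_eq_cube)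
    thus ?thesis using n_def by simp
  qed
  finally show ?thesis using finMG by simp
qed



definition hh :: "nat \<Rightarrow> nat" where "hh n = n div 8"
definition Wd :: "nat \<Rightarrow> real" where "Wd n = 13 * (real n + 1)"
definition Tc :: "nat \<Rightarrow> nat \<Rightarrow> real" where "Tc n e = real e * Wd n"
definition dl :: "nat \<Rightarrow> real" where "dl n = 1 / (2 * real (hh n))"
definition Pc :: "nat \<Rightarrow> nat \<Rightarrow> nat \<Rightarrow> real^2" where
  "Pc n x e = (if x < 4 * hh n then vector [13 * real x, 0]
     else if x < 6 * hh n then vector [(if even e then 0 else Wd n) - real (x - 4 * hh n) * (13 + dl n) - 6, -12]
     else vector [0, 100 * (real x + 1)])"
definition psi :: "nat \<Rightarrow> nat \<Rightarrow> real \<Rightarrow> real" where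
  "psi n e t = (if even e then t - Tc n e else Tc n (Suc e) - t)"
definition pos :: "nat \<Rightarrow> nat \<Rightarrow> real \<Rightarrow> nat \<Rightarrow> real^2" where
  "pos n e t x = (if x < 4 * hh n then vector [13 * real x, 0]
     else if x < 6 * hh n then vector [psi n e t - real (x - 4 * hh n) * (13 + dl n) - 6, -12]
     else vector [0, 100 * (real x + 1)])"

lemma dist2: "dist (a::real^2) b = sqrt ((a$1-b$1)^2 + (a$2-b$2)^2)"
  by (simp add: dist_vec_def L2_set_def sum_2 dist_real_def)

lemma dist_le13: "dist (a::real^2) b \<le> 13 \<longleftrightarrow> (a$1-b$1)^2 + (a$2-b$2)^2 \<le> 169"
  unfolding dist2 by (subst real_sqrt_le_iff') auto

lemma dist_ge1: "\<bar>a$1 - b$1\<bar> \<le> dist (a::real^2) b"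
  unfolding dist2 by (rule real_le_rsqrt) simp

lemma dist_ge2: "\<bar>a$2 - b$2\<bar> \<le> dist (a::real^2) b"
  unfolding dist2 by (rule real_le_rsqrt) simp

lemma vec2_eq: "(a::real^2) = b \<longleftrightarrow> a$1 = b$1 \<and> a$2 = b$2"
  by (simp add: vec_eq_iff forall_2)

lemma sq25: "(x::real)^2 + 144 \<le> 169 \<longleftrightarrow> \<bar>x\<bar> \<le> 5"
proof -
  have "(x::real)^2 + 144 \<le> 169 \<longleftrightarrow> x^2 \<le> 5^2" by simp
  also have "\<dots> \<longleftrightarrow> \<bar>x\<bar> \<le> \<bar>5\<bar>" by (rule abs_le_square_iff[symmetric])
  finally show ?thesis by simp
qed

context fixes n :: nat assumes n16: "16 \<le> n"
begin

lemma h2: "2 \<le> hh n" using n16 unfolding hh_def by simp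
lemma h6: "6 * hh n \<le> n" unfolding hh_def by simp
lemma Wpos: "Wd n > 0" unfolding Wd_def by simp
lemma dlpos: "dl n > 0" using h2 unfolding dl_def by simp
lemma ldl: "l < 2 * hh n \<Longrightarrow> real l * dl n < 1"
  using h2 unfolding dl_def by (simp add: field_simps)
lemma vtc: "valid_times (Tc n) tau"
  unfolding valid_times_def Tc_def using Wpos by (simp add: algebra_simps)
lemma Tc0: "Tc n 0 = 0" by (simp add: Tc_def)

lemma traj_static: "x < 4 * hh n \<or> 6 * hh n \<le> x \<Longrightarrow> traj (Tc n) tau (Pc n x) t = pos n e s x"
  by (subst traj_const[where c = "pos n e s x"]) (auto simp: Pc_def pos_def)

lemma traj_pos:
  assumes e: "e < tau" and t: "Tc n e \<le> t" "t \<le> Tc n (Suc e)"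
  shows "traj (Tc n) tau (Pc n x) t = pos n e t x"
proof (cases "x < 4 * hh n \<or> 6 * hh n \<le> x")
  case True thus ?thesis by (rule traj_static)
next
  case False
  have W: "Tc n (Suc e) - Tc n e = Wd n" unfolding Tc_def by (simp add: algebra_simps)
  have "traj (Tc n) tau (Pc n x) t = Pc n x e + ((t - Tc n e) / Wd n) *\<^sub>R (Pc n x (Suc e) - Pc n x e)"
    using traj_edge[OF vtc e t] W by simp
  also have "\<dots> = pos n e t x"
    using False Wpos unfolding vec2_eq Pc_def pos_def psi_def
    by (auto simp: Tc_def field_simps)
  finally show ?thesis .
qed

lemma dconn_pos:
  assumes e: "e < tau" and t: "Tc n e \<le> t" "t \<le> Tc n (Suc e)"
  shows "dconn (13/2) (Tc n) tau (Pc n) x y t \<longleftrightarrow> dist (pos n e t x) (pos n e t y) \<le> 13"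
  unfolding dconn_def traj_pos[OF assms] by simp

lemma dc_teeth:
  assumes "Suc q < 4 * hh n" shows "dconn (13/2) (Tc n) tau (Pc n) q (Suc q) t"
proof -
  have a: "traj (Tc n) tau (Pc n q) t = pos n 0 0 q" by (rule traj_static) (use assms in simp)
  have b: "traj (Tc n) tau (Pc n (Suc q)) t = pos n 0 0 (Suc q)" by (rule traj_static) (use assms in simp)
  show ?thesis unfolding dconn_def a b using assms by (simp add: dist_le13 pos_def algebra_simps)
qed

lemma dc_mt:
  assumes e: "e < tau" and t: "Tc n e \<le> t" "t \<le> Tc n (Suc e)" and l: "l < 2 * hh n" and q: "q < 4 * hh n"
  shows "dconn (13/2) (Tc n) tau (Pc n) (4 * hh n + l) q t \<longleftrightarrow>
    \<bar>psi n e t - 13 * real (l + q) - real l * dl n - 6\<bar> \<le> 5"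
proof -
  have "dconn (13/2) (Tc n) tau (Pc n) (4 * hh n + l) q t \<longleftrightarrow>
     (psi n e t - 13 * real (l + q) - real l * dl n - 6)^2 + 144 \<le> 169"
    unfolding dconn_pos[OF e t] dist_le13 using l q by (simp add: pos_def algebra_simps)
  thus ?thesis using sq25 by simp
qed

lemma ndc_mm:
  assumes e: "e < tau" and t: "Tc n e \<le> t" "t \<le> Tc n (Suc e)"
    and l: "l < 2 * hh n" and l': "l' < 2 * hh n" and ne: "l \<noteq> l'"
  shows "\<not> dconn (13/2) (Tc n) tau (Pc n) (4 * hh n + l) (4 * hh n + l') t"
proof
  assume "dconn (13/2) (Tc n) tau (Pc n) (4 * hh n + l) (4 * hh n + l') t"
  hence d: "dist (pos n e t (4 * hh n + l)) (pos n e t (4 * hh n + l')) \<le> 13" using dconn_pos[OF e t] by simp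
  have "\<bar>(real l' - real l) * (13 + dl n)\<bar> \<le> 13"
    using dist_ge1[of "pos n e t (4 * hh n + l)" "pos n e t (4 * hh n + l')"] d l l'
    by (simp add: pos_def algebra_simps)
  moreover have "1 \<le> \<bar>real l' - real l\<bar>" using ne by (cases "l < l'") auto
  moreover have "13 < 13 + dl n" using dlpos by simp
  moreover have "\<bar>(real l' - real l) * (13 + dl n)\<bar> = \<bar>real l' - real l\<bar> * (13 + dl n)"
    using dlpos by (simp add: abs_mult)
  moreover have "13 + dl n \<le> \<bar>real l' - real l\<bar> * (13 + dl n)"
    using mult_right_mono[of 1 "\<bar>real l' - real l\<bar>" "13 + dl n"] calculation(2) dlpos by simp
  ultimately show False by linarith
qed

lemma ndc_park:
  assumes e: "e < tau" and t: "Tc n e \<le> t" "t \<le> Tc n (Suc e)"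
    and x: "6 * hh n \<le> x" and ne: "y \<noteq> x"
  shows "\<not> dconn (13/2) (Tc n) tau (Pc n) x y t"
proof
  assume "dconn (13/2) (Tc n) tau (Pc n) x y t"
  hence d: "dist (pos n e t x) (pos n e t y) \<le> 13" using dconn_pos[OF e t] by simp
  have "\<bar>pos n e t x $ 2 - pos n e t y $ 2\<bar> \<le> 13" using dist_ge2 d by (rule order.trans)
  moreover have "100 \<le> \<bar>pos n e t x $ 2 - pos n e t y $ 2\<bar>"
  proof (cases "6 * hh n \<le> y")
    case True
    have "1 \<le> \<bar>real x - real y\<bar>" using ne by (cases "x < y") auto
    hence "100 \<le> 100 * \<bar>real x - real y\<bar>" by simp
    thus ?thesis using True x by (simp add: pos_def algebra_simps abs_mult[symmetric])
  next
    case False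
    thus ?thesis using x by (auto simp: pos_def)
  qed
  ultimately show False by simp
qed

end


lemma arith13:
  assumes "5 < \<bar>v\<bar>" "\<bar>v\<bar> < 8"
  shows "5 < \<bar>13 * real_of_int z + v\<bar>"
proof (cases "z = 0")
  case True thus ?thesis using assms by simp
next
  case False
  hence "z \<ge> 1 \<or> z \<le> -1" by linarith
  thus ?thesis
  proof
    assume "z \<ge> 1"
    hence "real_of_int z \<ge> 1" by simp
    thus ?thesis using assms by linarith
  next
    assume "z \<le> -1"
    hence "real_of_int z \<le> -1" by simp
    thus ?thesis using assms by linarith
  qed
qed

lemma nat_divmod_inj:
  fixes x x' r r' m :: nat
  assumes "x * m + r = x' * m + r'" "r < m" "r' < m"
  shows "x = x' \<and> r = r'"
proof -
  have "(x * m + r) mod m = r" using assms(2) by simp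
  moreover have "(x' * m + r') mod m = r'" using assms(3) by simp
  ultimately have rr: "r = r'" using assms(1) by simp
  hence "x * m = x' * m" using assms(1) by simp
  moreover have "m > 0" using assms(2) by simp
  ultimately show ?thesis using rr by simp
qed

context fixes n :: nat assumes n16: "16 \<le> n"
begin

abbreviation "XX \<equiv> {..<n}"
abbreviation "dc \<equiv> dconn (13/2) (Tc n)"

lemma dl_mono: "l \<le> j \<Longrightarrow> real l * dl n \<le> real j * dl n"
  using dlpos[OF n16] by (simp add: mult_right_mono)
lemma dl_nonneg: "0 \<le> real l * dl n"
  using dlpos[OF n16] by simp
lemma dl_strict: "l < j \<Longrightarrow> real l * dl n < real j * dl n"
  using dlpos[OF n16] by simp
lemma dl_diff: "real j * dl n - real l * dl n = (real j - real l) * dl n"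
  by (simp add: algebra_simps)

lemma iso_mover:
  assumes e: "e < tau" and ev: "even e" and t: "Tc n e \<le> t" "t \<le> Tc n (Suc e)" and l: "l < 2 * hh n"
    and tv: "t - Tc n e = 13 * real R + real l * dl n + 6 + v" and v: "5 < \<bar>v\<bar>" "\<bar>v\<bar> < 8"
  shows "\<forall>y\<in>XX. y \<noteq> 4 * hh n + l \<longrightarrow> \<not> dc tau (Pc n) (4 * hh n + l) y t"
proof (intro ballI impI)
  fix y assume y: "y \<in> XX" "y \<noteq> 4 * hh n + l"
  show "\<not> dc tau (Pc n) (4 * hh n + l) y t"
  proof (cases "y < 4 * hh n")
    case True
    have ps: "psi n e t = t - Tc n e" using ev by (simp add: psi_def)
    define z where "z = int R - int l - int y"
    have "psi n e t - 13 * real (l + y) - real l * dl n - 6 = 13 * real_of_int z + v"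
      unfolding ps tv z_def by (simp add: algebra_simps)
    hence "5 < \<bar>psi n e t - 13 * real (l + y) - real l * dl n - 6\<bar>" using arith13[OF v] by simp
    thus ?thesis using dc_mt[OF n16 e t l True] by simp
  next
    case False
    show ?thesis
    proof (cases "y < 6 * hh n")
      case True
      define l' where "l' = y - 4 * hh n"
      have yl: "y = 4 * hh n + l'" "l' < 2 * hh n" "l' \<noteq> l" using False True y unfolding l'_def by auto
      show ?thesis unfolding yl(1) by (rule ndc_mm[OF n16 e t l yl(2)]) (use yl in auto)
    next
      case False
      have "\<not> dc tau (Pc n) y (4 * hh n + l) t"
        by (rule ndc_park[OF n16 e t]) (use False y in auto)
      thus ?thesis by (simp add: dconn_sym)
    qed
  qed
qed

lemma iso_park:
  assumes e: "e < tau" and t: "Tc n e \<le> t" "t \<le> Tc n (Suc e)" and x: "6 * hh n \<le> x"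
  shows "\<forall>y\<in>XX. y \<noteq> x \<longrightarrow> \<not> dc tau (Pc n) x y t"
  using ndc_park[OF n16 e t x] by auto

lemma conn_teeth: "q < 4 * hh n \<Longrightarrow> eps_conn XX (13/2) (Tc n) tau (Pc n) 0 q t"
proof (induction q)
  case 0
  have "0 < n" using n16 by simp
  thus ?case by (simp add: eps_conn_def)
next
  case (Suc q)
  have c: "eps_conn XX (13/2) (Tc n) tau (Pc n) 0 q t" using Suc by simp
  have d: "dc tau (Pc n) q (Suc q) t" by (rule dc_teeth[OF n16]) (use Suc in simp)
  have sx: "Suc q < n" "q < n" using Suc h6[OF n16] by auto
  show ?case using c d sx unfolding eps_conn_def
    by (auto intro: rtranclp.rtrancl_into_rtrancl)
qed

definition Gs :: "nat \<Rightarrow> nat \<Rightarrow> nat set" where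
  "Gs i j = {..<4 * hh n} \<union> {4 * hh n + i..4 * hh n + j}"

definition aI :: "nat \<Rightarrow> nat \<Rightarrow> nat \<Rightarrow> real" where
  "aI e r j = Tc n e + 13 * real r + real j * dl n + 1"
definition bI :: "nat \<Rightarrow> nat \<Rightarrow> nat \<Rightarrow> real" where
  "bI e r i = Tc n e + 13 * real r + real i * dl n + 11"

lemma edge_room:
  assumes r: "r \<le> 4 * hh n - 2" and i: "i < 2 * hh n"
  shows "bI e r i + 1 \<le> Tc n (Suc e)"
proof -
  have "real r \<le> real n" using r h6[OF n16] by simp
  moreover have "real i * dl n < 1" by (rule ldl[OF n16 i])
  moreover have "Tc n (Suc e) = Tc n e + 13 * (real n + 1)" by (simp add: Tc_def Wd_def algebra_simps)
  moreover have "13 * real r \<le> 13 * real n" using calculation(1) by simp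
  ultimately show ?thesis unfolding bI_def by (simp add: algebra_simps)
qed

lemma iso_contra:
  assumes iso: "\<forall>y\<in>XX. y \<noteq> x \<longrightarrow> \<not> dc tau (Pc n) x y s"
    and grp: "\<forall>t\<in>J. \<exists>C\<in>components XX (13/2) (Tc n) tau (Pc n) t. H \<subseteq> C"
    and s: "s \<in> J" and x: "x \<in> H" and z: "0 \<in> H" and x0: "x \<noteq> 0"
  shows False
proof -
  obtain C where C: "C \<in> components XX (13/2) (Tc n) tau (Pc n) s" "H \<subseteq> C" using grp s by blast
  have "0 = x" by (rule isolated_comp[OF iso C(1)]) (use C x z in auto)
  thus False using x0 by simp
qed

lemma mg_member:
  assumes e: "e < tau" and ev: "even e" and r1: "2 * hh n - 1 \<le> r" and r2: "r \<le> 4 * hh n - 2"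
    and ij: "i \<le> j" and j: "j < 2 * hh n"
  shows "(Gs i j, {aI e r j..bI e r i}) \<in> maximal_groups XX (13/2) (Tc n) tau (Pc n) 1 0"
proof -
  let ?I = "{aI e r j..bI e r i}"
  have H2: "2 \<le> hh n" using h2[OF n16] .
  have i: "i < 2 * hh n" using ij j by simp
  have jdl: "real j * dl n < 1" by (rule ldl[OF n16 j])
  have idl: "real i * dl n < 1" by (rule ldl[OF n16 i])
  have ij': "real i * dl n \<le> real j * dl n" by (rule dl_mono[OF ij])
  have idl0: "0 \<le> real i * dl n" by (rule dl_nonneg)
  have Te0: "0 \<le> Tc n e" using Wpos[OF n16] by (simp add: Tc_def)
  have room: "bI e r i + 1 \<le> Tc n (Suc e)" by (rule edge_room[OF r2 i])
  have ab: "aI e r j \<le> bI e r i" unfolding aI_def bI_def using jdl idl0 by linarith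
  have inedge: "Tc n e \<le> t \<and> t \<le> Tc n (Suc e)" if "aI e r j - 1 \<le> t" "t \<le> bI e r i + 1" for t
    using that room unfolding aI_def using dl_nonneg[of j] by simp
  have ps: "psi n e t = t - Tc n e" for t using ev by (simp add: psi_def)
  have GX: "Gs i j \<subseteq> XX" unfolding Gs_def using j h6[OF n16] by auto
  have G0: "0 \<in> Gs i j" unfolding Gs_def using H2 by simp
  have cardG: "1 \<le> card (Gs i j)"
  proof -
    have "finite (Gs i j)" using GX finite_subset by blast
    thus ?thesis using G0 by (metis One_nat_def Suc_leI card_gt_0_iff empty_iff)
  qed
  have Tt: "bI e r i \<le> Tc n tau"
  proof -
    have "Tc n (Suc e) \<le> Tc n tau" by (rule T_mono[OF vtc[OF n16]]) (use e in auto)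
    thus ?thesis using room by simp
  qed
  have tog: "\<forall>t\<in>?I. \<exists>C\<in>components XX (13/2) (Tc n) tau (Pc n) t. Gs i j \<subseteq> C"
  proof
    fix t assume t: "t \<in> ?I"
    have te: "Tc n e \<le> t" "t \<le> Tc n (Suc e)" using inedge[of t] t by auto
    have memC: "{y \<in> XX. eps_conn XX (13/2) (Tc n) tau (Pc n) 0 y t} \<in> components XX (13/2) (Tc n) tau (Pc n) t"
      by (rule comp_mem) (use n16 in simp)
    have "Gs i j \<subseteq> {y \<in> XX. eps_conn XX (13/2) (Tc n) tau (Pc n) 0 y t}"
    proof
      fix g assume g: "g \<in> Gs i j"
      have gX: "g \<in> XX" using g GX by auto
      show "g \<in> {y \<in> XX. eps_conn XX (13/2) (Tc n) tau (Pc n) 0 y t}"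
      proof (cases "g < 4 * hh n")
        case True thus ?thesis using conn_teeth[OF True] gX by simp
      next
        case False
        define l where "l = g - 4 * hh n"
        have gl: "g = 4 * hh n + l" "i \<le> l" "l \<le> j" using False g unfolding l_def Gs_def by auto
        define q where "q = r - l"
        have q: "q < 4 * hh n" "l + q = r" using gl r1 r2 j H2 unfolding q_def by auto
        have ll: "l < 2 * hh n" using gl j by simp
        have "real i * dl n \<le> real l * dl n" "real l * dl n \<le> real j * dl n"
          using dl_mono gl by auto
        hence "\<bar>psi n e t - 13 * real (l + q) - real l * dl n - 6\<bar> \<le> 5"
          unfolding ps q(2) using t unfolding aI_def bI_def by auto
        hence d: "dc tau (Pc n) (4 * hh n + l) q t" using dc_mt[OF n16 e te ll q(1)] by simp
        have qX: "q \<in> XX" "4 * hh n + l \<in> XX" using q gl gX h6[OF n16] by auto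
        have "eps_conn XX (13/2) (Tc n) tau (Pc n) q (4 * hh n + l) t"
          using d qX by (auto simp: eps_conn_def dconn_sym)
        hence "eps_conn XX (13/2) (Tc n) tau (Pc n) 0 (4 * hh n + l) t"
          using conn_teeth[OF q(1)] eps_conn_trans by blast
        thus ?thesis using gl gX by simp
      qed
    qed
    thus "\<exists>C\<in>components XX (13/2) (Tc n) tau (Pc n) t. Gs i j \<subseteq> C" using memC by blast
  qed
  have grp: "is_group XX (13/2) (Tc n) tau (Pc n) 1 0 (Gs i j) ?I"
    unfolding is_group_def
    apply (intro conjI)
       apply (rule GX)
      apply (rule cardG)
    subgoal apply (rule exI[of _ "aI e r j"], rule exI[of _ "bI e r i"])
      using ab Tt Te0 dl_nonneg[of j] unfolding aI_def Tc0[OF n16] by simp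
    by (rule tog)
  have nocov: "\<not> (\<exists>H J. is_group XX (13/2) (Tc n) tau (Pc n) 1 0 H J \<and> (H, J) \<noteq> (Gs i j, ?I) \<and> Gs i j \<subseteq> H \<and> ?I \<subseteq> J)"
  proof
    assume "\<exists>H J. is_group XX (13/2) (Tc n) tau (Pc n) 1 0 H J \<and> (H, J) \<noteq> (Gs i j, ?I) \<and> Gs i j \<subseteq> H \<and> ?I \<subseteq> J"
    then obtain H J where HJ: "is_group XX (13/2) (Tc n) tau (Pc n) 1 0 H J" "(H, J) \<noteq> (Gs i j, ?I)"
      "Gs i j \<subseteq> H" "?I \<subseteq> J" by blast
    obtain a' b' where J: "J = {a'..b'}" "a' \<le> b'" using HJ(1) unfolding is_group_def by blast
    have HX: "H \<subseteq> XX" using HJ(1) unfolding is_group_def by blast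
    have htog: "\<forall>t\<in>J. \<exists>C\<in>components XX (13/2) (Tc n) tau (Pc n) t. H \<subseteq> C"
      using HJ(1) unfolding is_group_def by blast
    have a'le: "a' \<le> aI e r j" "bI e r i \<le> b'" using HJ(4) ab unfolding J by auto
    have H0: "0 \<in> H" using G0 HJ(3) by auto
    have mj: "4 * hh n + j \<in> H" "4 * hh n + i \<in> H" using HJ(3) ij unfolding Gs_def by auto
    have aeq: "a' = aI e r j"
    proof (rule ccontr)
      assume "a' \<noteq> aI e r j"
      hence lt: "a' < aI e r j" using a'le by simp
      define s where "s = max a' (aI e r j - 1/2)"
      have s: "s \<in> J" "aI e r j - 1/2 \<le> s" "s < aI e r j" using lt ab a'le unfolding s_def J by auto
      have se: "Tc n e \<le> s" "s \<le> Tc n (Suc e)" using inedge[of s] s ab by auto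
      have "s - Tc n e = 13 * real r + real j * dl n + 6 + (s - aI e r j - 5)" unfolding aI_def by simp
      moreover have "5 < \<bar>s - aI e r j - 5\<bar>" "\<bar>s - aI e r j - 5\<bar> < 8" using s by auto
      ultimately have iso: "\<forall>y\<in>XX. y \<noteq> 4 * hh n + j \<longrightarrow> \<not> dc tau (Pc n) (4 * hh n + j) y s"
        using iso_mover[OF e ev se j] by blast
      show False by (rule iso_contra[OF iso htog s(1) mj(1) H0]) (use H2 in simp)
    qed
    have beq: "b' = bI e r i"
    proof (rule ccontr)
      assume "b' \<noteq> bI e r i"
      hence lt: "bI e r i < b'" using a'le by simp
      define s where "s = min b' (bI e r i + 1/2)"
      have s: "s \<in> J" "s \<le> bI e r i + 1/2" "bI e r i < s" using lt ab a'le unfolding s_def J by auto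
      have se: "Tc n e \<le> s" "s \<le> Tc n (Suc e)" using inedge[of s] s ab by auto
      have "s - Tc n e = 13 * real r + real i * dl n + 6 + (s - bI e r i + 5)" unfolding bI_def by simp
      moreover have "5 < \<bar>s - bI e r i + 5\<bar>" "\<bar>s - bI e r i + 5\<bar> < 8" using s by auto
      ultimately have iso: "\<forall>y\<in>XX. y \<noteq> 4 * hh n + i \<longrightarrow> \<not> dc tau (Pc n) (4 * hh n + i) y s"
        using iso_mover[OF e ev se i] by blast
      show False by (rule iso_contra[OF iso htog s(1) mj(2) H0]) (use H2 in simp)
    qed
    have JI: "J = ?I" using J aeq beq by simp
    hence "H \<noteq> Gs i j" using HJ(2) by auto
    then obtain z where z: "z \<in> H" "z \<notin> Gs i j" using HJ(3) by blast
    have zX: "z < n" using z HX by auto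
    have aJ: "aI e r j \<in> J" "bI e r i \<in> J" using JI ab by auto
    have ae: "Tc n e \<le> aI e r j" "aI e r j \<le> Tc n (Suc e)" using inedge[of "aI e r j"] ab by auto
    have be: "Tc n e \<le> bI e r i" "bI e r i \<le> Tc n (Suc e)" using inedge[of "bI e r i"] ab by auto
    have z0: "z \<noteq> 0" proof assume "z = 0" thus False using z G0 by simp qed
    show False
    proof (cases "6 * hh n \<le> z")
      case True
      show False by (rule iso_contra[OF iso_park[OF e ae True] htog aJ(1) z(1) H0 z0])
    next
      case False
      have z4: "4 * hh n \<le> z" using z unfolding Gs_def by (cases "z < 4 * hh n") auto
      define l where "l = z - 4 * hh n"
      have zl: "z = 4 * hh n + l" "l < 2 * hh n" using z4 False unfolding l_def by auto
      have lij: "l < i \<or> j < l" using z zl unfolding Gs_def by auto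
      thus False
      proof
        assume li: "l < i"
        have d: "real l * dl n < real i * dl n" by (rule dl_strict[OF li])
        have ldl0: "real i * dl n < 1" by (rule idl)
        have "bI e r i - Tc n e = 13 * real r + real l * dl n + 6 + (real i * dl n - real l * dl n + 5)"
          unfolding bI_def by simp
        moreover have "5 < \<bar>real i * dl n - real l * dl n + 5\<bar>" "\<bar>real i * dl n - real l * dl n + 5\<bar> < 8"
          using d ldl0 dl_nonneg[of l] by auto
        ultimately have iso: "\<forall>y\<in>XX. y \<noteq> 4 * hh n + l \<longrightarrow> \<not> dc tau (Pc n) (4 * hh n + l) y (bI e r i)"
          using iso_mover[OF e ev be zl(2)] by blast
        show False by (rule iso_contra[OF iso htog aJ(2)]) (use z zl z0 H0 in auto)
      next
        assume jl: "j < l"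
        have d: "real j * dl n < real l * dl n" by (rule dl_strict[OF jl])
        have ldl0: "real l * dl n < 1" by (rule ldl[OF n16 zl(2)])
        have "aI e r j - Tc n e = 13 * real r + real l * dl n + 6 + (real j * dl n - real l * dl n - 5)"
          unfolding aI_def by simp
        moreover have "5 < \<bar>real j * dl n - real l * dl n - 5\<bar>" "\<bar>real j * dl n - real l * dl n - 5\<bar> < 8"
          using d ldl0 dl_nonneg[of j] by auto
        ultimately have iso: "\<forall>y\<in>XX. y \<noteq> 4 * hh n + l \<longrightarrow> \<not> dc tau (Pc n) (4 * hh n + l) y (aI e r j)"
          using iso_mover[OF e ev ae zl(2)] by blast
        show False by (rule iso_contra[OF iso htog aJ(1)]) (use z zl z0 H0 in auto)
      qed
    qed
  qed
  show ?thesis unfolding maximal_groups_def using grp nocov by simp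
qed

end


context fixes n :: nat assumes n16: "16 \<le> n"
begin

lemma Gs_inj:
  assumes eq: "Gs n i j = Gs n i' j'" and ij: "i \<le> j" and ij': "i' \<le> j'"
  shows "i = i' \<and> j = j'"
proof -
  have mem: "4 * hh n + x \<in> Gs n a b \<longleftrightarrow> a \<le> x \<and> x \<le> b" for x a b by (auto simp: Gs_def[OF n16])
  have "4 * hh n + i \<in> Gs n i' j'" "4 * hh n + j \<in> Gs n i' j'" using eq ij mem by auto
  moreover have "4 * hh n + i' \<in> Gs n i j" "4 * hh n + j' \<in> Gs n i j" using eq ij' mem by auto
  ultimately show ?thesis using mem by (meson le_antisym)
qed

lemma count_lower:
  assumes tau: "1 \<le> tau"
  shows "real tau * real n ^ 3 / 4096 \<le> real (card (maximal_groups {..<n} (13/2) (Tc n) tau (Pc n) 1 0))"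
proof -
  let ?MG = "maximal_groups {..<n} (13/2) (Tc n) tau (Pc n) 1 0"
  define H where "H = hh n"
  define A where "A = (tau + 1) div 2"
  define D where "D = {..<A} \<times> {..<2 * H} \<times> {..<H} \<times> {..<H}"
  define f where "f = (\<lambda>(a, b, c, d). (Gs n c (H + d),
      {aI n (2 * a) (2 * H - 1 + b) (H + d) .. bI n (2 * a) (2 * H - 1 + b) c}))"
  have H2: "2 \<le> H" unfolding H_def using h2[OF n16] .
  have H6: "6 * H \<le> n" unfolding H_def using h6[OF n16] .
  have sub: "f ` D \<subseteq> ?MG"
  proof
    fix z assume "z \<in> f ` D"
    then obtain a b c d where abcd: "a < A" "b < 2 * H" "c < H" "d < H" "z = f (a, b, c, d)"
      unfolding D_def by auto
    have e: "2 * a < tau" using abcd(1) unfolding A_def by linarith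
    have "(Gs n c (H + d), {aI n (2 * a) (2 * H - 1 + b) (H + d) .. bI n (2 * a) (2 * H - 1 + b) c}) \<in> ?MG"
      unfolding H_def by (rule mg_member[OF n16 e]) (use abcd H2 in \<open>auto simp: H_def\<close>)
    thus "z \<in> ?MG" using abcd(5) unfolding f_def by simp
  qed
  have inj: "inj_on f D"
  proof (rule inj_onI)
    fix x y assume x: "x \<in> D" and y: "y \<in> D" and fxy: "f x = f y"
    obtain a b c d where xa: "x = (a, b, c, d)" "a < A" "b < 2 * H" "c < H" "d < H" using x unfolding D_def by auto
    obtain a' b' c' d' where ya: "y = (a', b', c', d')" "a' < A" "b' < 2 * H" "c' < H" "d' < H" using y unfolding D_def by auto
    have G: "Gs n c (H + d) = Gs n c' (H + d')" and
      I: "{aI n (2 * a) (2 * H - 1 + b) (H + d) .. bI n (2 * a) (2 * H - 1 + b) c} =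
          {aI n (2 * a') (2 * H - 1 + b') (H + d') .. bI n (2 * a') (2 * H - 1 + b') c'}"
      using fxy xa ya unfolding f_def by auto
    have cd: "c = c' \<and> H + d = H + d'" by (rule Gs_inj[OF G]) (use xa ya in auto)
    have jd: "real (H + d) * dl n < 1" by (rule ldl[OF n16]) (use xa in \<open>auto simp: H_def\<close>)
    have cdl: "0 \<le> real c * dl n" by (rule dl_nonneg[OF n16])
    have ab: "aI n (2 * a) (2 * H - 1 + b) (H + d) \<le> bI n (2 * a) (2 * H - 1 + b) c"
      unfolding aI_def[OF n16] bI_def[OF n16] using jd cdl by simp
    have aeq: "aI n (2 * a) (2 * H - 1 + b) (H + d) = aI n (2 * a') (2 * H - 1 + b') (H + d')"
      using Icc_same[OF ab I] by simp
    hence "real (2 * a) * (13 * (real n + 1)) + 13 * real (2 * H - 1 + b) =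
           real (2 * a') * (13 * (real n + 1)) + 13 * real (2 * H - 1 + b')"
      using cd unfolding aI_def[OF n16] Tc_def Wd_def by simp
    hence "real (2 * a * (n + 1) + (2 * H - 1 + b)) = real (2 * a' * (n + 1) + (2 * H - 1 + b'))"
      by (simp add: algebra_simps)
    hence eqn: "2 * a * (n + 1) + (2 * H - 1 + b) = 2 * a' * (n + 1) + (2 * H - 1 + b')"
      by (simp only: of_nat_eq_iff)
    have dm: "2 * a = 2 * a' \<and> 2 * H - 1 + b = 2 * H - 1 + b'"
      by (rule nat_divmod_inj[OF eqn]) (use xa ya H6 H2 in auto)
    have "b = b'" using dm[THEN conjunct2] H2 by linarith
    moreover have "a = a'" using dm[THEN conjunct1] by simp
    ultimately show "x = y" using xa ya cd by simp
  qed
  have finMG: "finite ?MG" using upper_bound[OF _ tau vtc[OF n16], of "{..<n}" 1] by simp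
  have "card D = card (f ` D)" by (rule card_image[OF inj, symmetric])
  also have "\<dots> \<le> card ?MG" by (rule card_mono[OF finMG sub])
  finally have cD: "card D \<le> card ?MG" .
  have cardD: "card D = A * (2 * H * (H * H))" unfolding D_def by (simp add: card_cartesian_product)
  have A2: "real tau \<le> 2 * real A" unfolding A_def by linarith
  have H16: "real n \<le> 16 * real H" unfolding H_def hh_def using n16 by linarith
  have "real tau * real n ^ 3 / 4096 \<le> (2 * real A) * (16 * real H) ^ 3 / 4096"
  proof -
    have "real n ^ 3 \<le> (16 * real H) ^ 3" by (rule power_mono[OF H16]) simp
    hence "real tau * real n ^ 3 \<le> (2 * real A) * (16 * real H) ^ 3"
      by (rule mult_mono[OF A2]) simp_all
    thus ?thesis by simp
  qed
  also have "\<dots> = real (card D)" unfolding cardD by (simp add: power3_eq_cube algebra_simps)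
  also have "\<dots> \<le> real (card ?MG)" using cD by simp
  finally show ?thesis .
qed

end


lemma event_sym: "event k eps T tau P x y t = event k eps T tau P y x t"
  by (simp add: event_def becomes_conn_def becomes_disc_def dconn_sym)

lemma ev_basic:
  assumes "event k eps T tau P x y t"
  shows "T 0 < t" "t < T tau" "dconn eps T tau P x y t"
    "\<And>ep. ep > 0 \<Longrightarrow> \<exists>s. \<not> dconn eps T tau P x y s \<and> (if k then t - ep < s \<and> s < t else t < s \<and> s < t + ep)"
  using assms unfolding event_def becomes_conn_def becomes_disc_def by (cases k; auto)+

context fixes n :: nat assumes n16: "16 \<le> n"
begin

definition Cth :: "nat \<Rightarrow> nat \<Rightarrow> real" where
  "Cth l q = 13 * real (l + q) + real l * dl n + 6"

lemma psi_lin: "psi n e u = psi n e t + (if even e then 1 else -1) * (u - t)"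
  by (simp add: psi_def)

lemma edge_of:
  assumes "0 < t" "t < Tc n tau"
  shows "\<exists>e<tau. Tc n e \<le> t \<and> t < Tc n (Suc e)"
proof -
  define W where "W = Wd n"
  have W: "W > 0" unfolding W_def using Wpos[OF n16] .
  define e where "e = nat \<lfloor>t / W\<rfloor>"
  have fl: "0 \<le> \<lfloor>t / W\<rfloor>" using assms W by simp
  have re: "real e = of_int \<lfloor>t / W\<rfloor>" unfolding e_def using fl by simp
  have "real e \<le> t / W" "t / W < real e + 1" unfolding re by linarith+
  hence 1: "real e * W \<le> t" "t < (real e + 1) * W" using W by (auto simp: field_simps)
  have "real e * W < real tau * W" using 1 assms(2) unfolding Tc_def W_def by simp
  hence "e < tau" using W by simp
  thus ?thesis using 1 unfolding Tc_def W_def by (intro exI[of _ e]) (auto simp: algebra_simps)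
qed

lemma ev_mt:
  assumes ev: "event k (13/2) (Tc n) tau (Pc n) (4 * hh n + l) q t"
    and l: "l < 2 * hh n" and q: "q < 4 * hh n" and e: "e < tau" and te: "Tc n e \<le> t" "t < Tc n (Suc e)"
  shows "(psi n e t = Cth l q - 5 \<and> (k \<longleftrightarrow> even e)) \<or> (psi n e t = Cth l q + 5 \<and> (k \<longleftrightarrow> odd e))"
proof -
  let ?d = "dconn (13/2) (Tc n) tau (Pc n) (4 * hh n + l) q"
  define g where "g u = psi n e u - Cth l q" for u
  define sg :: real where "sg = (if even e then 1 else -1)"
  have sg: "\<bar>sg\<bar> = 1" "sg * sg = 1" unfolding sg_def by auto
  have dg: "?d u \<longleftrightarrow> \<bar>g u\<bar> \<le> 5" if "Tc n e \<le> u" "u \<le> Tc n (Suc e)" for u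
    using dc_mt[OF n16 e that l q] unfolding g_def Cth_def by (simp add: algebra_simps)
  have gl: "sg * g u = sg * g t + (u - t)" for u
    unfolding g_def sg_def using psi_lin[of e u t] by (auto simp: algebra_simps)
  have absg: "\<bar>g u\<bar> = \<bar>sg * g u\<bar>" for u using sg by (simp add: abs_mult)
  have dt: "?d t" using ev_basic(3)[OF ev] .
  have fail: "\<And>ep. ep > 0 \<Longrightarrow> \<exists>s. \<not> ?d s \<and> (if k then t - ep < s \<and> s < t else t < s \<and> s < t + ep)"
    using ev_basic(4)[OF ev] by blast
  have W: "Wd n > 0" using Wpos[OF n16] .
  have TS: "Tc n (Suc e) = Tc n e + Wd n" by (simp add: Tc_def algebra_simps)
  have Cb: "6 \<le> Cth l q" "Cth l q + 5 < Wd n"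
  proof -
    show "6 \<le> Cth l q" unfolding Cth_def using dl_nonneg[OF n16, of l] by simp
    have "real l * dl n < 1" by (rule ldl[OF n16 l])
    moreover have "real (l + q) \<le> real n - 1" using l q h6[OF n16] by simp
    moreover have "13 * real (l + q) \<le> 13 * real n - 13" using calculation(2) by simp
    ultimately show "Cth l q + 5 < Wd n" unfolding Cth_def Wd_def by (simp add: algebra_simps)
  qed
  have tgt: "Tc n e < t"
  proof (rule ccontr)
    assume "\<not> Tc n e < t"
    hence t0: "t = Tc n e" using te by simp
    have "\<bar>g t\<bar> \<le> 5" using dg[of t] dt te by simp
    moreover have "psi n e t = 0 \<or> psi n e t = Wd n" using t0 TS unfolding psi_def by auto
    ultimately show False using Cb unfolding g_def by auto
  qed
  have g5: "\<bar>g t\<bar> = 5"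
  proof (rule ccontr)
    assume ne: "\<bar>g t\<bar> \<noteq> 5"
    have lt: "\<bar>g t\<bar> < 5" using ne dg[of t] dt te by simp
    define ep where "ep = min (5 - \<bar>g t\<bar>) (min (t - Tc n e) (Tc n (Suc e) - t))"
    have ep: "ep > 0" unfolding ep_def using lt tgt te by simp
    obtain s where s: "\<not> ?d s" "if k then t - ep < s \<and> s < t else t < s \<and> s < t + ep" using fail[OF ep] by blast
    have st: "\<bar>s - t\<bar> < ep" using s(2) by (cases k) auto
    have se: "Tc n e \<le> s" "s \<le> Tc n (Suc e)" using st unfolding ep_def by auto
    have "\<bar>sg * g s\<bar> \<le> \<bar>sg * g t\<bar> + \<bar>s - t\<bar>" unfolding gl[of s] by (rule abs_triangle_ineq)
    hence "\<bar>g s\<bar> < 5" using st absg[of s] absg[of t] unfolding ep_def by linarith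
    thus False using dg[OF se] s(1) by simp
  qed
  have kind1: "k" if m5: "sg * g t = -5"
  proof (rule ccontr)
    assume nk: "\<not> k"
    define ep where "ep = min 10 (Tc n (Suc e) - t)"
    have ep: "ep > 0" unfolding ep_def using te by simp
    obtain s where s: "\<not> ?d s" "t < s" "s < t + ep" using fail[OF ep] nk by auto
    have se: "Tc n e \<le> s" "s \<le> Tc n (Suc e)" using s te unfolding ep_def by auto
    have "sg * g s = -5 + (s - t)" using gl[of s] m5 by simp
    hence "\<bar>g s\<bar> < 5" using absg[of s] s unfolding ep_def by auto
    thus False using dg[OF se] s(1) by simp
  qed
  have kind2: "\<not> k" if p5: "sg * g t = 5"
  proof
    assume kk: "k"
    define ep where "ep = min 10 (t - Tc n e)"
    have ep: "ep > 0" unfolding ep_def using tgt by simp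
    obtain s where s: "\<not> ?d s" "t - ep < s" "s < t" using fail[OF ep] kk by auto
    have se: "Tc n e \<le> s" "s \<le> Tc n (Suc e)" using s te unfolding ep_def by auto
    have "sg * g s = 5 + (s - t)" using gl[of s] p5 by simp
    hence "\<bar>g s\<bar> < 5" using absg[of s] s unfolding ep_def by auto
    thus False using dg[OF se] s(1) by simp
  qed
  show ?thesis
  proof (cases "g t = -5")
    case True
    hence "k \<longleftrightarrow> even e" using kind1 kind2 unfolding sg_def by (cases "even e") auto
    thus ?thesis using True unfolding g_def by simp
  next
    case False
    hence gt: "g t = 5" using g5 by linarith
    hence "k \<longleftrightarrow> odd e" using kind1 kind2 unfolding sg_def by (cases "even e") auto
    thus ?thesis using gt unfolding g_def by simp
  qed
qed

lemma thr:
  assumes l: "l < 2 * hh n" and l': "l' < 2 * hh n" and c: "c = 5 \<or> c = -5" and c': "c' = 5 \<or> c' = -5"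
    and eq: "Cth l q + c = Cth l' q' + c'"
  shows "l = l' \<and> q = q' \<and> c = c'"
proof -
  define z where "z = int (l + q) - int (l' + q')"
  define w where "w = real l * dl n - real l' * dl n"
  have w: "\<bar>w\<bar> < 1" unfolding w_def using ldl[OF n16 l] ldl[OF n16 l'] dl_nonneg[OF n16, of l] dl_nonneg[OF n16, of l'] by linarith
  have e: "13 * real_of_int z + w + c - c' = 0" using eq unfolding Cth_def z_def w_def by (simp add: algebra_simps)
  have z0: "z = 0"
  proof (rule ccontr)
    assume "z \<noteq> 0"
    hence "z \<ge> 1 \<or> z \<le> -1" by linarith
    hence "real_of_int z \<ge> 1 \<or> real_of_int z \<le> -1" by (metis of_int_le_iff of_int_1 of_int_minus)
    thus False using e w c c' by auto
  qed
  have cc: "c = c'" using e w c c' z0 by auto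
  have "w = 0" using e z0 cc by simp
  hence "real l * dl n = real l' * dl n" unfolding w_def by simp
  hence ll: "l = l'" using dlpos[OF n16] by simp
  have "l + q = l' + q'" using z0 unfolding z_def by simp
  thus ?thesis using ll cc by simp
qed

lemma classify:
  assumes x: "x < n" and y: "y < n" and xy: "x \<noteq> y" and ev: "event k (13/2) (Tc n) tau (Pc n) x y t"
    and e: "e < tau" and te: "Tc n e \<le> t" "t < Tc n (Suc e)"
  shows "\<exists>l q. l < 2 * hh n \<and> q < 4 * hh n \<and> {x, y} = {4 * hh n + l, q} \<and>
             event k (13/2) (Tc n) tau (Pc n) (4 * hh n + l) q t"
proof -
  let ?H = "hh n"
  have te': "Tc n e \<le> t" "t \<le> Tc n (Suc e)" using te by auto
  have dt: "dconn (13/2) (Tc n) tau (Pc n) x y t" using ev_basic(3)[OF ev] .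
  show ?thesis
  proof (cases "x < 4 * ?H \<and> y < 4 * ?H")
    case True
    have cst: "dconn (13/2) (Tc n) tau (Pc n) x y s = dconn (13/2) (Tc n) tau (Pc n) x y t" for s
      unfolding dconn_def using traj_static[OF n16, of x tau _ 0 0] traj_static[OF n16, of y tau _ 0 0] True by simp
    obtain s where "\<not> dconn (13/2) (Tc n) tau (Pc n) x y s" using ev_basic(4)[OF ev, of 1] by auto
    thus ?thesis using cst dt by simp
  next
    case nt: False
    show ?thesis
    proof (cases "6 * ?H \<le> x \<or> 6 * ?H \<le> y")
      case True
      thus ?thesis
      proof
        assume "6 * ?H \<le> x"
        thus ?thesis using ndc_park[OF n16 e te' _ xy[symmetric]] dt by simp
      next
        assume a: "6 * ?H \<le> y"
        have "\<not> dconn (13/2) (Tc n) tau (Pc n) y x t" by (rule ndc_park[OF n16 e te' a xy])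
        thus ?thesis using dt dconn_sym by metis
      qed
    next
      case np: False
      show ?thesis
      proof (cases "4 * ?H \<le> x \<and> 4 * ?H \<le> y")
        case True
        define l where "l = x - 4 * ?H"
        define l' where "l' = y - 4 * ?H"
        have "x = 4 * ?H + l" "y = 4 * ?H + l'" "l < 2 * ?H" "l' < 2 * ?H" "l \<noteq> l'"
          using True np xy unfolding l_def l'_def by auto
        thus ?thesis using ndc_mm[OF n16 e te', of l l'] dt by simp
      next
        case False
        show ?thesis
        proof (cases "4 * ?H \<le> x")
          case True
          hence yq: "y < 4 * ?H" using False by simp
          define l where "l = x - 4 * ?H"
          have xl: "x = 4 * ?H + l" "l < 2 * ?H" using True np unfolding l_def by auto
          show ?thesis using xl yq ev by (intro exI[of _ l] exI[of _ y]) auto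
        next
          case xq: False
          hence y4: "4 * ?H \<le> y" using nt by auto
          define l where "l = y - 4 * ?H"
          have yl: "y = 4 * ?H + l" "l < 2 * ?H" using y4 np unfolding l_def by auto
          have "event k (13/2) (Tc n) tau (Pc n) y x t" using ev event_sym by metis
          thus ?thesis using yl xq by (intro exI[of _ l] exI[of _ x]) auto
        qed
      qed
    qed
  qed
qed

lemma gp: "general_position {..<n} (13/2) (Tc n) tau (Pc n)"
  unfolding general_position_def
proof (intro allI impI)
  fix k k' x y x' y' t
  assume x: "x \<in> {..<n}" and y: "y \<in> {..<n}" and x': "x' \<in> {..<n}" and y': "y' \<in> {..<n}"
    and xy: "x \<noteq> y" and xy': "x' \<noteq> y'"
    and ev: "event k (13/2) (Tc n) tau (Pc n) x y t" and ev': "event k' (13/2) (Tc n) tau (Pc n) x' y' t"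
  have t: "0 < t" "t < Tc n tau" using ev_basic(1,2)[OF ev] Tc0[OF n16] by auto
  obtain e where e: "e < tau" "Tc n e \<le> t" "t < Tc n (Suc e)" using edge_of[OF t] by blast
  obtain l q where lq: "l < 2 * hh n" "q < 4 * hh n" "{x, y} = {4 * hh n + l, q}"
      "event k (13/2) (Tc n) tau (Pc n) (4 * hh n + l) q t"
    using classify[OF _ _ xy ev e] x y by auto
  obtain l' q' where lq': "l' < 2 * hh n" "q' < 4 * hh n" "{x', y'} = {4 * hh n + l', q'}"
      "event k' (13/2) (Tc n) tau (Pc n) (4 * hh n + l') q' t"
    using classify[OF _ _ xy' ev' e] x' y' by auto
  have A: "(psi n e t = Cth l q - 5 \<and> (k \<longleftrightarrow> even e)) \<or> (psi n e t = Cth l q + 5 \<and> (k \<longleftrightarrow> odd e))"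
    by (rule ev_mt[OF lq(4) lq(1,2) e])
  have B: "(psi n e t = Cth l' q' - 5 \<and> (k' \<longleftrightarrow> even e)) \<or> (psi n e t = Cth l' q' + 5 \<and> (k' \<longleftrightarrow> odd e))"
    by (rule ev_mt[OF lq'(4) lq'(1,2) e])
  have "\<exists>cc. (cc = 5 \<or> cc = -5) \<and> psi n e t = Cth l q + cc \<and> (k \<longleftrightarrow> (if cc = -5 then even e else odd e))"
    using A
  proof
    assume "psi n e t = Cth l q - 5 \<and> (k \<longleftrightarrow> even e)"
    thus ?thesis by (intro exI[of _ "-5"]) simp
  next
    assume "psi n e t = Cth l q + 5 \<and> (k \<longleftrightarrow> odd e)"
    thus ?thesis by (intro exI[of _ "5"]) simp
  qed
  then obtain c where c: "c = 5 \<or> c = -5" "psi n e t = Cth l q + c" "k \<longleftrightarrow> (if c = -5 then even e else odd e)"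
    by blast
  have "\<exists>cc. (cc = 5 \<or> cc = -5) \<and> psi n e t = Cth l' q' + cc \<and> (k' \<longleftrightarrow> (if cc = -5 then even e else odd e))"
    using B
  proof
    assume "psi n e t = Cth l' q' - 5 \<and> (k' \<longleftrightarrow> even e)"
    thus ?thesis by (intro exI[of _ "-5"]) simp
  next
    assume "psi n e t = Cth l' q' + 5 \<and> (k' \<longleftrightarrow> odd e)"
    thus ?thesis by (intro exI[of _ "5"]) simp
  qed
  then obtain c' where c': "c' = 5 \<or> c' = -5" "psi n e t = Cth l' q' + c'" "k' \<longleftrightarrow> (if c' = -5 then even e else odd e)"
    by blast
  have "l = l' \<and> q = q' \<and> c = c'" by (rule thr[OF lq(1) lq'(1) c(1) c'(1)]) (use c c' in simp)
  thus "k = k' \<and> {x, y} = {x', y'}" using c c' lq lq' by auto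
qed

end

theorem theorem4:
  shows "(\<exists>c::real. \<forall>(X::nat set) (T::nat \<Rightarrow> real) (tau::nat) (P::nat \<Rightarrow> nat \<Rightarrow> point)
            (eps::real) (m::nat) (delta::real).
            finite X \<longrightarrow> tau \<ge> 1 \<longrightarrow> valid_times T tau \<longrightarrow>
            eps \<ge> 0 \<longrightarrow> m \<ge> 1 \<longrightarrow> delta \<ge> 0 \<longrightarrow> general_position X eps T tau P \<longrightarrow>
            finite (maximal_groups X eps T tau P m delta) \<and>
            real (card (maximal_groups X eps T tau P m delta))
              \<le> c * real tau * real (card X) ^ 3)
      \<and> (\<exists>c::real. c > 0 \<and> (\<exists>N::nat. \<forall>n tau. n \<ge> N \<longrightarrow> tau \<ge> N \<longrightarrow>
            (\<exists>(X::nat set) (T::nat \<Rightarrow> real) (P::nat \<Rightarrow> nat \<Rightarrow> point)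
               (eps::real) (m::nat) (delta::real).
               finite X \<and> card X = n \<and> tau \<ge> 1 \<and> valid_times T tau \<and>
               eps \<ge> 0 \<and> m \<ge> 1 \<and> delta \<ge> 0 \<and> general_position X eps T tau P \<and>
               real (card (maximal_groups X eps T tau P m delta))
                 \<ge> c * real tau * real n ^ 3)))"
proof (intro conjI)
  show "\<exists>c::real. \<forall>(X::nat set) (T::nat \<Rightarrow> real) (tau::nat) (P::nat \<Rightarrow> nat \<Rightarrow> point)
            (eps::real) (m::nat) (delta::real).
            finite X \<longrightarrow> tau \<ge> 1 \<longrightarrow> valid_times T tau \<longrightarrow>
            eps \<ge> 0 \<longrightarrow> m \<ge> 1 \<longrightarrow> delta \<ge> 0 \<longrightarrow> general_position X eps T tau P \<longrightarrow>
            finite (maximal_groups X eps T tau P m delta) \<and>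
            real (card (maximal_groups X eps T tau P m delta))
              \<le> c * real tau * real (card X) ^ 3"
  proof (rule exI[of _ 6], intro allI impI)
    fix X :: "nat set" and T :: "nat \<Rightarrow> real" and tau :: nat and P :: "nat \<Rightarrow> nat \<Rightarrow> point"
      and eps :: real and m :: nat and delta :: real
    assume fin: "finite X" and tau: "tau \<ge> 1" and vt: "valid_times T tau" and "eps \<ge> 0"
      and m: "m \<ge> 1" and "delta \<ge> 0" and "general_position X eps T tau P"
    have ub: "finite (maximal_groups X eps T tau P m delta) \<and>
         card (maximal_groups X eps T tau P m delta) \<le> 6 * tau * card X ^ 3"
      by (rule upper_bound[OF fin tau vt m])
    hence "real (card (maximal_groups X eps T tau P m delta)) \<le> real (6 * tau * card X ^ 3)"
      by (simp only: of_nat_le_iff)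
    thus "finite (maximal_groups X eps T tau P m delta) \<and>
            real (card (maximal_groups X eps T tau P m delta)) \<le> 6 * real tau * real (card X) ^ 3"
      using ub by simp
  qed
next
  show "\<exists>c::real. c > 0 \<and> (\<exists>N::nat. \<forall>n tau. n \<ge> N \<longrightarrow> tau \<ge> N \<longrightarrow>
            (\<exists>(X::nat set) (T::nat \<Rightarrow> real) (P::nat \<Rightarrow> nat \<Rightarrow> point)
               (eps::real) (m::nat) (delta::real).
               finite X \<and> card X = n \<and> tau \<ge> 1 \<and> valid_times T tau \<and>
               eps \<ge> 0 \<and> m \<ge> 1 \<and> delta \<ge> 0 \<and> general_position X eps T tau P \<and>
               real (card (maximal_groups X eps T tau P m delta))
                 \<ge> c * real tau * real n ^ 3))"
  proof (rule exI[of _ "1/4096"], intro conjI, simp, rule exI[of _ 16], intro allI impI)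
    fix n tau :: nat assume n: "16 \<le> n" and tau: "16 \<le> tau"
    have t1: "1 \<le> tau" using tau by simp
    have cl: "real tau * real n ^ 3 / 4096 \<le> real (card (maximal_groups {..<n} (13/2) (Tc n) tau (Pc n) 1 0))"
      by (rule count_lower[OF n t1])
    show "\<exists>(X::nat set) (T::nat \<Rightarrow> real) (P::nat \<Rightarrow> nat \<Rightarrow> point)
               (eps::real) (m::nat) (delta::real).
               finite X \<and> card X = n \<and> tau \<ge> 1 \<and> valid_times T tau \<and>
               eps \<ge> 0 \<and> m \<ge> 1 \<and> delta \<ge> 0 \<and> general_position X eps T tau P \<and>
               real (card (maximal_groups X eps T tau P m delta))
                 \<ge> 1/4096 * real tau * real n ^ 3"
      apply (rule exI[of _ "{..<n}"], rule exI[of _ "Tc n"], rule exI[of _ "Pc n"],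
             rule exI[of _ "13/2"], rule exI[of _ 1], rule exI[of _ 0])
      using t1 vtc[OF n] gp[OF n] cl by simp
  qed
qed

end
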